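(* Let $0<\lambda<\frac{5-\sqrt{21}}{2}$ and let $K$ be the attractor of the IFS $f_1(x)=\lambda x$, $f_2(x)=\lambda x+2\lambda$, $f_3(x)=\lambda x+3\lambda-\lambda^2$, $f_4(x)=\lambda x+1-\lambda$. Then for every $k\ge1$, $$\dim_H(U_{2^k})=\dim_H(U_1)=\frac{\log(2+\sqrt2)}{-\log\lambda}.$$ Moreover $U_i=\emptyset$ for every positive integer $i$ that is not a power of $2$, and $U_{\aleph_0}=\emptyset$.
   Context: A coding of $x\in K$ is a sequence $(i_n)\in\{1,2,3,4\}^{\mathbb{N}}$ with $x=\lim_{n\to\infty}f_{i_1}\circ\cdots\circ f_{i_n}(0)$. For $k\in\{1,2,\dots\}\cup\{\aleph_0\}$, $U_k$ denotes the set of $x\in K$ having exactly $k$ distinct codings. *)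

theory Defs
  imports "HOL-Analysis.Analysis"
begin

text \<open>Contribution of a covering set to the s-dimensional sum, with the standard
  conventions: the empty set contributes 0 and (for nonempty U) diam(U)^0 = 1.\<close>
definition hcontrib :: "real \<Rightarrow> real set \<Rightarrow> real" where
  "hcontrib s U = (if U = {} then 0 else if s = 0 then 1 else diameter U powr s)"

definition hausdorff_pre :: "real \<Rightarrow> real \<Rightarrow> real set \<Rightarrow> ennreal" where
  "hausdorff_pre s \<delta> E =
     (INF U \<in> {U :: nat \<Rightarrow> real set. E \<subseteq> (\<Union>i. U i) \<and>
                   (\<forall>i. bounded (U i) \<and> diameter (U i) \<le> \<delta>)}.
        (\<Sum>i. ennreal (hcontrib s (U i))))"

definition hausdorff_measure :: "real \<Rightarrow> real set \<Rightarrow> ennreal" where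
  "hausdorff_measure s E = (SUP \<delta> \<in> {0<..}. hausdorff_pre s \<delta> E)"

definition hausdorff_dim :: "real set \<Rightarrow> real" where
  "hausdorff_dim E = Inf {s. 0 \<le> s \<and> hausdorff_measure s E = 0}"

definition fmap :: "real \<Rightarrow> nat \<Rightarrow> real \<Rightarrow> real" where
  "fmap lam i x =
     (if i = 1 then lam * x
      else if i = 2 then lam * x + 2 * lam
      else if i = 3 then lam * x + 3 * lam - lam\<^sup>2
      else lam * x + 1 - lam)"

definition attractor :: "real \<Rightarrow> real set" where
  "attractor lam = (THE K. compact K \<and> K \<noteq> {} \<and> K = (\<Union>i\<in>{1..4}. fmap lam i ` K))"

text \<open>f_{c 0} o ... o f_{c (n-1)} applied to 0 (the paper's i_1 is c 0).\<close>
definition prefix_point :: "real \<Rightarrow> (nat \<Rightarrow> nat) \<Rightarrow> nat \<Rightarrow> real" where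
  "prefix_point lam c n = foldr (\<lambda>j y. fmap lam (c j) y) [0..<n] 0"

definition codings :: "real \<Rightarrow> real \<Rightarrow> (nat \<Rightarrow> nat) set" where
  "codings lam x = {c. (\<forall>n. c n \<in> {1..4}) \<and> prefix_point lam c \<longlonglongrightarrow> x}"

definition Ufin :: "real \<Rightarrow> nat \<Rightarrow> real set" where
  "Ufin lam k = {x \<in> attractor lam. finite (codings lam x) \<and> card (codings lam x) = k}"

definition Ualeph0 :: "real \<Rightarrow> real set" where
  "Ualeph0 lam = {x \<in> attractor lam. countable (codings lam x) \<and> infinite (codings lam x)}"

end

theory Submission
  imports Defs
begin


definition tt :: "real \<Rightarrow> nat \<Rightarrow> real" where "tt l i = fmap l i 0"
definition Sig :: "(nat \<Rightarrow> nat) set" where "Sig = {c. \<forall>n. c n \<in> {1..4}}"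
definition pp :: "real \<Rightarrow> (nat \<Rightarrow> nat) \<Rightarrow> real" where "pp l c = (\<Sum>j. l^j * tt l (c j))"
definition shift :: "nat \<Rightarrow> (nat \<Rightarrow> nat) \<Rightarrow> nat \<Rightarrow> nat" where "shift m c = (\<lambda>n. c (n + m))"

lemma fmap_eq: "fmap l i x = l * x + tt l i"
  by (simp add: fmap_def tt_def)

lemma foldr_gen:
  "foldr (\<lambda>j y. fmap l (c j) y) [m..<m+k] y = (\<Sum>j<k. l^j * tt l (c (m+j))) + l^k * y"
proof (induction k arbitrary: m)
  case 0 then show ?case by simp
next
  case (Suc k)
  have "[m..<m+Suc k] = m # [Suc m..<Suc m + k]" by (simp add: upt_conv_Cons)
  then have "foldr (\<lambda>j y. fmap l (c j) y) [m..<m+Suc k] y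
     = l * ((\<Sum>j<k. l^j * tt l (c (Suc m+j))) + l^k * y) + tt l (c m)"
    using Suc[of "Suc m"] by (simp add: fmap_eq)
  also have "\<dots> = (\<Sum>j<Suc k. l^j * tt l (c (m+j))) + l^Suc k * y"
    by (subst sum.lessThan_Suc_shift) (simp add: sum_distrib_left algebra_simps)
  finally show ?case .
qed

lemma prefix_point_eq: "prefix_point l c n = (\<Sum>j<n. l^j * tt l (c j))"
  using foldr_gen[of l c 0 n 0] by (simp add: prefix_point_def)

lemma shift_Sig: "c \<in> Sig \<Longrightarrow> shift m c \<in> Sig" by (simp add: Sig_def shift_def)
lemma tt_one: "tt l (Suc 0) = 0" by (simp add: tt_def fmap_def)

context
  fixes l :: real
  assumes l0: "0 < l" and l1: "l < (5 - sqrt 21) / 2"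
begin

lemma lsmall: "l < 21/100"
proof -
  have "(458/100::real) < sqrt 21" by (rule real_less_rsqrt) (simp add: power2_eq_square)
  moreover have "l * 2 < 5 - sqrt 21" using l1 by simp
  ultimately show ?thesis by linarith
qed

lemma lquad: "1 - 5*l + l^2 > 0"
proof -
  have s: "sqrt 21 ^ 2 = 21" by simp
  have s2: "sqrt 21 * sqrt 21 = 21" by simp
  have gen: "(l - (5 - a)/2) * (l - (5 + a)/2) = l*l - 5 * l + (25 - a * a)/4" for a :: real
    by (simp add: field_simps)
  have "(l - (5 - sqrt 21)/2) * (l - (5 + sqrt 21)/2) = l*l - 5 * l + (25 - sqrt 21 * sqrt 21)/4"
    by (rule gen)
  then have "1 - 5*l + l^2 = (l - (5 - sqrt 21)/2) * (l - (5 + sqrt 21)/2)"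
    using s2 by (simp add: power2_eq_square)
  moreover have "l - (5 - sqrt 21)/2 < 0" using l1 by simp
  moreover have "l - (5 + sqrt 21)/2 < 0"
  proof -
    have "sqrt 21 \<ge> 0" by simp
    then have "(5 + sqrt 21)/2 \<ge> 5/2" by simp
    then show ?thesis using lsmall by linarith
  qed
  ultimately show ?thesis by (simp add: mult_neg_neg)
qed

lemma tt_vals: "tt l 1 = 0" "tt l 2 = 2*l" "tt l 3 = 3*l - l^2" "tt l 4 = 1 - l"
  by (auto simp: tt_def fmap_def)

lemma tt_bounds: assumes "i \<in> {1..4::nat}" shows "0 \<le> tt l i" "tt l i \<le> 1 - l"
proof -
  have i: "i = 1 \<or> i = 2 \<or> i = 3 \<or> i = 4" using assms by auto
  have a: "l*l \<le> l" using l0 lsmall by (simp add: mult_le_cancel_right1)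
  have b: "l*l \<ge> 0" using l0 by simp
  have "0 \<le> tt l i \<and> tt l i \<le> 1 - l"
    using i
  proof (elim disjE)
    assume "i = 3" then have "tt l i = 3*l - l*l" by (simp add: tt_vals power2_eq_square)
    then show ?thesis using a b l0 lsmall by linarith
  next
    assume "i = 1" then have "tt l i = 0" by (simp add: tt_def fmap_def)
    then show ?thesis using l0 lsmall by linarith
  next
    assume "i = 2" then have "tt l i = 2*l" by (simp add: tt_vals)
    then show ?thesis using l0 lsmall by linarith
  next
    assume "i = 4" then have "tt l i = 1 - l" by (simp add: tt_vals)
    then show ?thesis using l0 lsmall by linarith
  qed
  then show "0 \<le> tt l i" "tt l i \<le> 1 - l" by auto
qed

lemma summ: assumes "c \<in> Sig" shows "summable (\<lambda>j. l^j * tt l (c j))"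
proof (rule summable_comparison_test')
  show "summable (\<lambda>j. l^j * (1 - l))" using l0 lsmall by (intro summable_mult2) simp
  show "norm (l^j * tt l (c j)) \<le> l^j * (1 - l)" for j
  proof -
    have "c j \<in> {1..4}" using assms by (simp add: Sig_def)
    then have "0 \<le> tt l (c j)" "tt l (c j) \<le> 1 - l" using tt_bounds by auto
    then show ?thesis using l0 by (simp add: abs_mult mult_left_mono)
  qed
qed

lemma codings_eq: "codings l x = {c \<in> Sig. pp l c = x}"
proof -
  have "prefix_point l c \<longlonglongrightarrow> x \<longleftrightarrow> pp l c = x" if "c \<in> Sig" for c
  proof -
    have "(\<lambda>n. \<Sum>j<n. l^j * tt l (c j)) \<longlonglongrightarrow> pp l c"
      using summable_LIMSEQ[OF summ[OF that]] by (simp add: pp_def)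
    moreover have "prefix_point l c = (\<lambda>n. \<Sum>j<n. l^j * tt l (c j))"
      by (simp add: fun_eq_iff prefix_point_eq)
    ultimately show ?thesis using LIMSEQ_unique by metis
  qed
  moreover have "codings l x = {c. c \<in> Sig \<and> prefix_point l c \<longlonglongrightarrow> x}"
    by (simp add: codings_def Sig_def)
  ultimately show ?thesis by blast
qed


lemma pp_shift: assumes "c \<in> Sig"
  shows "pp l c = (\<Sum>j<m. l^j * tt l (c j)) + l^m * pp l (shift m c)"
proof -
  have "pp l c = (\<Sum>n. l^(n+m) * tt l (c (n+m))) + (\<Sum>j<m. l^j * tt l (c j))"
    unfolding pp_def by (rule suminf_split_initial_segment[OF summ[OF assms]])
  also have "(\<Sum>n. l^(n+m) * tt l (c (n+m))) = l^m * pp l (shift m c)"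
    unfolding pp_def shift_def
    using suminf_mult[OF summ[OF shift_Sig[OF assms, of m]], of "l^m"]
    by (simp add: shift_def power_add algebra_simps)
  finally show ?thesis by simp
qed

lemma pp_cons: "c \<in> Sig \<Longrightarrow> pp l c = tt l (c 0) + l * pp l (shift 1 c)"
  using pp_shift[of c 1] by simp

lemma pp_bounds: assumes "c \<in> Sig" shows "0 \<le> pp l c" "pp l c \<le> 1"
proof -
  show "0 \<le> pp l c" unfolding pp_def
    using tt_bounds assms l0 by (intro suminf_nonneg summ) (simp_all add: Sig_def)
  have "pp l c \<le> (\<Sum>j. l^j * (1 - l))" unfolding pp_def
    using tt_bounds assms l0 lsmall
    by (intro suminf_le summ summable_mult2) (simp_all add: Sig_def mult_left_mono)
  also have "\<dots> = 1" using l0 lsmall by (simp add: suminf_mult2[symmetric] suminf_geometric)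
  finally show "pp l c \<le> 1" .
qed

end


definition okp :: "nat \<Rightarrow> nat \<Rightarrow> bool" where "okp a b \<longleftrightarrow> \<not>(a = 2 \<and> b = 4) \<and> \<not>(a = 3 \<and> b = 1)"
definition Nf :: "(nat \<Rightarrow> nat) \<Rightarrow> nat \<Rightarrow> nat" where
  "Nf d n = (if d n = 3 \<and> d (Suc n) = 1 then 2 else if 0 < n \<and> d (n - 1) = 3 \<and> d n = 1 then 4 else d n)"
definition no31 :: "(nat \<Rightarrow> nat) \<Rightarrow> bool" where "no31 u \<longleftrightarrow> (\<forall>n. \<not>(u n = 3 \<and> u (Suc n) = 1))"
definition Dset :: "(nat \<Rightarrow> nat) \<Rightarrow> (nat \<Rightarrow> nat) set" where "Dset u = {d \<in> Sig. Nf d = u}"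
definition Pset :: "(nat \<Rightarrow> nat) \<Rightarrow> nat set" where "Pset u = {n. u n = 2 \<and> u (Suc n) = 4}"

lemma Nf_Sig: "c \<in> Sig \<Longrightarrow> Nf c \<in> Sig" by (auto simp: Sig_def Nf_def)
lemma Nf_no31: "no31 (Nf c)" by (auto simp: no31_def Nf_def split: if_splits)
lemma Nf_id: assumes "no31 u" shows "Nf u = u"
proof
  fix x
  have a: "\<not> (u x = 3 \<and> u (Suc x) = 1)" using assms by (simp add: no31_def)
  have b: "\<not> (0 < x \<and> u (x - 1) = 3 \<and> u x = 1)"
  proof
    assume c: "0 < x \<and> u (x - 1) = 3 \<and> u x = 1"
    then have "Suc (x - 1) = x" by simp
    then show False using c assms unfolding no31_def by metis
  qed
  show "Nf u x = u x" using a b unfolding Nf_def by simp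
qed

lemma uncountable_Pow_nat:
  fixes P :: "nat set" assumes inf: "infinite P" shows "\<not> countable (Pow P)"
proof
  assume cP: "countable (Pow P)"
  define g where "g = from_nat_into (Pow P)"
  have rg: "range g = Pow P" unfolding g_def by (rule range_from_nat_into) (use cP in auto)
  define e where "e = enumerate P"
  have eP: "e n \<in> P" for n unfolding e_def by (rule enumerate_in_set[OF inf])
  have einj: "inj e" unfolding e_def using strict_mono_enumerate[OF inf] strict_mono_imp_inj_on by blast
  define T where "T = {e n |n. e n \<notin> g n}"
  have "T \<in> Pow P" using eP by (auto simp: T_def)
  then obtain m where m: "T = g m" using rg by (metis imageE)
  have "e m \<in> T \<longleftrightarrow> e m \<notin> g m" unfolding T_def using einj by (auto dest: injD)
  then show False using m by blast
qed

context
  fixes l :: real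
  assumes l0: "0 < l" and l1: "l < (5 - sqrt 21) / 2"
begin

lemma Nf_partial:
  "(\<Sum>j<n. l^j * (tt l (Nf d j) - tt l (d j)))
    = (if 0 < n \<and> d (n - 1) = 3 \<and> d n = 1 then l^(n-1) * (tt l 2 - tt l 3) else 0)"
proof (induction n)
  case 0 then show ?case by simp
next
  case (Suc n)
  have key: "l^m * (tt l 2 - tt l 3) + l^Suc m * (tt l 4 - tt l 1) = 0" for m
    by (simp add: tt_vals[OF l0 l1] tt_one algebra_simps power2_eq_square)
  let ?F = "\<lambda>j. l^j * (tt l (Nf d j) - tt l (d j))"
  have S: "(\<Sum>j<Suc n. ?F j) = (\<Sum>j<n. ?F j) + ?F n" by simp
  show ?case
  proof (cases "d n = 3 \<and> d (Suc n) = 1")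
    case True
    then have "Nf d n = 2" by (simp add: Nf_def)
    moreover have "\<not>(0 < n \<and> d (n-1) = 3 \<and> d n = 1)" using True by simp
    ultimately show ?thesis using S Suc.IH True by simp
  next
    case F1: False
    show ?thesis
    proof (cases "0 < n \<and> d (n - 1) = 3 \<and> d n = 1")
      case True
      then have N4: "Nf d n = 4" using F1 by (simp add: Nf_def)
      have "n = Suc (n-1)" using True by simp
      then have "l^Suc (n-1) = l^n" by metis
      then have k: "l^(n-1) * (tt l 2 - tt l 3) + l^n * (tt l 4 - tt l 1) = 0"
        using key[of "n-1"] by simp
      have "?F n = l^n * (tt l 4 - tt l 1)" using N4 True by simp
      then have "(\<Sum>j<Suc n. ?F j) = 0" using S Suc.IH True k N4 by simp
      then show ?thesis using True by simp
    next
      case False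
      then have "Nf d n = d n" using F1 by (simp add: Nf_def)
      have a: "(\<Sum>j<n. ?F j) = 0" by (simp only: Suc.IH if_not_P[OF False])
      have b: "?F n = 0" using \<open>Nf d n = d n\<close> by simp
      have c: "\<not> (0 < Suc n \<and> d (Suc n - 1) = 3 \<and> d (Suc n) = 1)" using F1 by simp
      show ?thesis unfolding S a b using c by (simp only: if_False)
    qed
  qed
qed

lemma pp_Nf: assumes c: "c \<in> Sig" shows "pp l (Nf c) = pp l c"
proof -
  let ?f = "\<lambda>j. l^j * (tt l (Nf c j) - tt l (c j))"
  define K where "K = tt l 2 - tt l 3"
  have "(\<lambda>n. \<Sum>j<n. ?f j) \<longlonglongrightarrow> 0"
  proof (rule Lim_null_comparison)
    show "\<forall>\<^sub>F n in sequentially. norm (\<Sum>j<n. ?f j) \<le> \<bar>K\<bar> / l * l^n"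
    proof (rule eventually_sequentiallyI[of 1])
      fix n :: nat assume "1 \<le> n"
      then have "l^n = l * l^(n-1)" by (metis Suc_pred' less_eq_Suc_le power_Suc zero_less_one order_less_le_trans)
      then have "\<bar>K\<bar> / l * l^n = \<bar>K\<bar> * l^(n-1)" using l0 by simp
      moreover have "norm (\<Sum>j<n. ?f j) \<le> \<bar>K\<bar> * l^(n-1)"
        unfolding Nf_partial K_def using l0 by (simp add: abs_mult)
      ultimately show "norm (\<Sum>j<n. ?f j) \<le> \<bar>K\<bar> / l * l^n" by simp
    qed
    show "(\<lambda>n. \<bar>K\<bar> / l * l^n) \<longlonglongrightarrow> 0"
      using l0 lsmall[OF l0 l1] by (intro tendsto_mult_right_zero LIMSEQ_power_zero) simp
  qed
  then have "?f sums 0" by (simp add: sums_def)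
  moreover have "?f sums (pp l (Nf c) - pp l c)"
    unfolding pp_def right_diff_distrib
    using summ[OF l0 l1 Nf_Sig[OF c]] summ[OF l0 l1 c] by (intro sums_diff summable_sums)
  ultimately show ?thesis using sums_unique2 by force
qed

lemma tt_ge2l: "i \<in> {2,3,4} \<Longrightarrow> tt l i \<ge> 2 * l"
  using l0 lsmall[OF l0 l1] by (auto simp: tt_vals[OF l0 l1] power2_eq_square)

lemma pp_range: assumes "c \<in> Sig"
  shows "tt l (c 0) \<le> pp l c" "pp l c \<le> tt l (c 0) + l"
  using pp_cons[OF l0 l1 assms] pp_bounds[OF l0 l1 shift_Sig[OF assms, of 1]] l0
  by (auto simp: mult_le_cancel_left1)

lemma pp_cases: assumes w: "w \<in> Sig"
  shows "(w 0 = 1 \<and> pp l w \<le> l) \<or> (w 0 = 2 \<and> 2*l \<le> pp l w \<and> pp l w \<le> 3*l)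
       \<or> (w 0 = 3 \<and> 3*l - l*l \<le> pp l w \<and> pp l w \<le> 4*l - l*l) \<or> (w 0 = 4 \<and> 1 - l \<le> pp l w)"
proof -
  have tv: "tt l 1 = 0" "tt l 2 = 2*l" "tt l 3 = 3*l - l*l" "tt l 4 = 1 - l"
    using tt_vals[OF l0 l1] by (simp_all add: power2_eq_square)
  have r: "tt l (w 0) \<le> pp l w" "pp l w \<le> tt l (w 0) + l" using pp_range w by auto
  have "w 0 \<in> {1..4}" using w by (simp add: Sig_def)
  then have "w 0 = 1 \<or> w 0 = 2 \<or> w 0 = 3 \<or> w 0 = 4" by auto
  then show ?thesis
  proof (elim disjE)
    assume a: "w 0 = 1" show ?thesis using r unfolding a tv by simp
  next
    assume a: "w 0 = 2" show ?thesis using r unfolding a tv by simp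
  next
    assume a: "w 0 = 3" show ?thesis using r unfolding a tv by simp
  next
    assume a: "w 0 = 4" show ?thesis using r unfolding a tv by simp
  qed
qed

lemma three_big:
  assumes w: "w \<in> Sig" "no31 w" "w 0 = 3" shows "pp l w > 3 * l"
proof (rule ccontr)
  assume x: "\<not> pp l w > 3 * l"
  have tv: "tt l 3 = 3*l - l*l" using tt_vals[OF l0 l1] by (simp_all add: power2_eq_square)
  have "w 1 \<in> {1..4}" "w 1 \<noteq> 1" using w by (auto simp: Sig_def no31_def)
  then have w1: "w 1 \<in> {2,3,4}" by auto
  have s1: "shift 1 w \<in> Sig" using shift_Sig w by auto
  have "tt l (w 1) \<le> pp l (shift 1 w)" using pp_range[OF s1] by (simp add: shift_def)
  then have "2 * l \<le> pp l (shift 1 w)" using tt_ge2l[OF w1] by simp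
  then have "l * (2 * l) \<le> l * pp l (shift 1 w)" using l0 by (simp add: mult_left_mono)
  moreover have "pp l w = 3*l - l*l + l * pp l (shift 1 w)" using pp_cons[OF l0 l1 w(1)] w(3) tv by simp
  ultimately have "3*l - l*l + l * (2*l) \<le> 3 * l" using x by linarith
  moreover have "l * l > 0" using l0 by simp
  ultimately show False by (simp add: algebra_simps)
qed

lemma head_eq:
  assumes u: "u \<in> Sig" "no31 u" and v: "v \<in> Sig" "no31 v" and e: "pp l u = pp l v"
  shows "u 0 = v 0"
proof (rule ccontr)
  assume ne: "u 0 \<noteq> v 0"
  have lq: "1 - 5*l + l*l > 0" using lquad[OF l0 l1] by (simp add: power2_eq_square)
  have ls: "l < 21/100" by (rule lsmall[OF l0 l1])
  have ll: "l * l \<ge> 0" "l*l \<le> l" using l0 ls by (auto simp: mult_le_cancel_left1)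
  have t3: "u 0 = 3 \<Longrightarrow> pp l u > 3 * l" "v 0 = 3 \<Longrightarrow> pp l v > 3 * l"
    using three_big u v by auto
  show False
    using pp_cases[OF u(1)] pp_cases[OF v(1)] ne e t3 ll lq ls l0
    by (elim disjE conjE; linarith)
qed

lemma no31_shift: "no31 u \<Longrightarrow> no31 (shift m u)" by (simp add: no31_def shift_def)

lemma pp_inj_no31:
  assumes "u \<in> Sig" "no31 u" "v \<in> Sig" "no31 v" "pp l u = pp l v" shows "u = v"
proof
  fix n show "u n = v n" using assms
  proof (induction n arbitrary: u v)
    case 0 then show ?case using head_eq by blast
  next
    case (Suc n)
    have h: "u 0 = v 0" using head_eq Suc.prems by blast
    have "tt l (u 0) + l * pp l (shift 1 u) = tt l (v 0) + l * pp l (shift 1 v)"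
      using pp_cons[OF l0 l1] Suc.prems by metis
    then have "pp l (shift 1 u) = pp l (shift 1 v)" using h l0 by simp
    then have "shift 1 u n = shift 1 v n"
      using Suc.IH[of "shift 1 u" "shift 1 v"] Suc.prems shift_Sig no31_shift by blast
    then show ?case by (simp add: shift_def)
  qed
qed

lemma codings_pp: assumes "c \<in> Sig" shows "codings l (pp l c) = Dset (Nf c)"
proof -
  have "pp l d = pp l c \<longleftrightarrow> Nf d = Nf c" if "d \<in> Sig" for d
  proof
    assume "pp l d = pp l c"
    then have "pp l (Nf d) = pp l (Nf c)" using pp_Nf assms that by simp
    then show "Nf d = Nf c" using pp_inj_no31 Nf_Sig Nf_no31 assms that by blast
  next
    assume "Nf d = Nf c"
    then show "pp l d = pp l c" using pp_Nf[OF that] pp_Nf[OF assms] by simp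
  qed
  then show ?thesis unfolding codings_eq[OF l0 l1] Dset_def by blast
qed

end

lemma Dset_bij:
  assumes u: "u \<in> Sig" "no31 u"
  shows "bij_betw (\<lambda>d. {n. d n = 3 \<and> d (Suc n) = 1}) (Dset u) (Pow (Pset u))"
proof -
  define R where "R S = (\<lambda>n. if n \<in> S then 3 else if 0 < n \<and> n - 1 \<in> S then 1 else u n)" for S :: "nat set"
  let ?phi = "\<lambda>d::nat\<Rightarrow>nat. {n. d n = 3 \<and> d (Suc n) = 1}"
  show ?thesis
  proof (rule bij_betw_byWitness[where f'=R])
    show "\<forall>d\<in>Dset u. R (?phi d) = d"
    proof
      fix d assume d: "d \<in> Dset u"
      show "R (?phi d) = d"
      proof
        fix n
        have Nd: "Nf d n = u n" using d by (simp add: Dset_def)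
        show "R (?phi d) n = d n"
        proof (cases n)
          case 0 then show ?thesis using Nd by (auto simp: R_def Nf_def split: if_splits)
        next
          case (Suc m) then show ?thesis using Nd by (auto simp: R_def Nf_def split: if_splits)
        qed
      qed
    qed
    have noadj: "Suc n \<notin> S" if "S \<subseteq> Pset u" "n \<in> S" for S n
    proof
      assume "Suc n \<in> S"
      then have "u (Suc n) = 2" using that(1) unfolding Pset_def by blast
      moreover have "u (Suc n) = 4" using that unfolding Pset_def by blast
      ultimately show False by simp
    qed
    have RS: "R S n = 3 \<and> R S (Suc n) = 1 \<longleftrightarrow> n \<in> S" if S: "S \<subseteq> Pset u" for S n
    proof
      assume a: "R S n = 3 \<and> R S (Suc n) = 1"
      show "n \<in> S"
      proof (rule ccontr)
        assume n: "n \<notin> S"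
        have "Suc n \<notin> S" using a by (auto simp: R_def split: if_splits)
        then have "R S (Suc n) = u (Suc n)" using n by (simp add: R_def)
        moreover have "R S n = u n"
          using a n by (auto simp: R_def split: if_splits)
        ultimately have "u n = 3" "u (Suc n) = 1" using a by simp_all
        then show False using u(2) unfolding no31_def by blast
      qed
    next
      assume "n \<in> S" then show "R S n = 3 \<and> R S (Suc n) = 1"
        using noadj[OF S] by (simp add: R_def)
    qed
    show "\<forall>S\<in>Pow (Pset u). ?phi (R S) = S"
      using RS by auto
    show "?phi ` Dset u \<subseteq> Pow (Pset u)"
    proof (auto simp: Pset_def)
      fix d n assume d: "d \<in> Dset u" "d n = 3" "d (Suc n) = Suc 0"
      have "Nf d n = u n" "Nf d (Suc n) = u (Suc n)" using d by (auto simp: Dset_def)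
      then show "u n = 2" "u (Suc n) = 4" using d by (auto simp: Nf_def)
    qed
    show "R ` Pow (Pset u) \<subseteq> Dset u"
    proof
      fix x assume "x \<in> R ` Pow (Pset u)"
      then obtain S where S: "S \<subseteq> Pset u" and x: "x = R S" by auto
      have "R S \<in> Sig" using u(1) by (auto simp: R_def Sig_def)
      moreover have "Nf (R S) = u"
      proof
        fix n
        show "Nf (R S) n = u n"
        proof (cases n)
          case 0 then show ?thesis using RS[OF S, of 0] S by (auto simp: Nf_def R_def Pset_def)
        next
          case (Suc m)
          have "Nf (R S) n = (if n \<in> S then 2 else if m \<in> S then 4 else R S n)"
            using RS[OF S, of n] RS[OF S, of m] Suc by (simp add: Nf_def)
          then show ?thesis using S Suc by (auto simp: R_def Pset_def)
        qed
      qed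
      ultimately show "x \<in> Dset u" using x by (simp add: Dset_def)
    qed
  qed
qed

lemma Dset_card:
  assumes u: "u \<in> Sig" "no31 u"
  shows "finite (Pset u) \<Longrightarrow> finite (Dset u) \<and> card (Dset u) = 2 ^ card (Pset u)"
    and "infinite (Pset u) \<Longrightarrow> \<not> countable (Dset u)"
proof -
  note b = Dset_bij[OF u]
  show "finite (Pset u) \<Longrightarrow> finite (Dset u) \<and> card (Dset u) = 2 ^ card (Pset u)"
    using bij_betw_finite[OF b] bij_betw_same_card[OF b] by (simp add: card_Pow)
  show "infinite (Pset u) \<Longrightarrow> \<not> countable (Dset u)"
  proof (rule notI)
    assume "infinite (Pset u)" "countable (Dset u)"
    then have "countable ((\<lambda>d. {n. d n = 3 \<and> d (Suc n) = 1}) ` Dset u)" by (intro countable_image)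
    then have "countable (Pow (Pset u))" using bij_betw_imp_surj_on[OF b] by simp
    then show False using uncountable_Pow_nat \<open>infinite (Pset u)\<close> by blast
  qed
qed



definition ccons :: "nat \<Rightarrow> (nat \<Rightarrow> nat) \<Rightarrow> nat \<Rightarrow> nat" where
  "ccons a d = (\<lambda>n. if n = 0 then a else d (n - 1))"

lemma ccons_Sig: "a \<in> {1..4} \<Longrightarrow> d \<in> Sig \<Longrightarrow> ccons a d \<in> Sig"
  by (auto simp: Sig_def ccons_def)
lemma shift_ccons: "shift 1 (ccons a d) = d" by (simp add: shift_def ccons_def)

lemma fmap_fun: "fmap l i = (\<lambda>x. l * x + tt l i)" by (simp add: fun_eq_iff fmap_eq)

context
  fixes l :: real
  assumes l0: "0 < l" and l1: "l < (5 - sqrt 21) / 2"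
begin

lemma fmap_pp: "a \<in> {1..4} \<Longrightarrow> d \<in> Sig \<Longrightarrow> fmap l a (pp l d) = pp l (ccons a d)"
  using pp_cons[OF l0 l1 ccons_Sig, of a d] unfolding shift_ccons by (simp add: fmap_eq ccons_def)

lemma P_eq: "pp l ` Sig = (\<Union>i\<in>{1..4}. fmap l i ` (pp l ` Sig))"
proof
  show "pp l ` Sig \<subseteq> (\<Union>i\<in>{1..4}. fmap l i ` (pp l ` Sig))"
  proof
    fix x assume "x \<in> pp l ` Sig"
    then obtain c where c: "c \<in> Sig" "x = pp l c" by auto
    have "x = fmap l (c 0) (pp l (shift 1 c))" using pp_cons[OF l0 l1 c(1)] c by (simp add: fmap_eq)
    moreover have "c 0 \<in> {1..4}" using c by (simp add: Sig_def)
    ultimately show "x \<in> (\<Union>i\<in>{1..4}. fmap l i ` (pp l ` Sig))" using shift_Sig[OF c(1)] by blast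
  qed
  show "(\<Union>i\<in>{1..4}. fmap l i ` (pp l ` Sig)) \<subseteq> pp l ` Sig"
    using fmap_pp ccons_Sig by blast
qed

lemma chain_sub:
  assumes b: "bounded K" and inv: "K \<subseteq> (\<Union>i\<in>{1..4}. fmap l i ` K)"
  shows "K \<subseteq> pp l ` Sig"
proof
  fix x assume xK: "x \<in> K"
  obtain M where M: "\<forall>y\<in>K. \<bar>y\<bar> \<le> M" using b bounded_real by blast
  have ex: "\<exists>p. fst p \<in> {1..4} \<and> snd p \<in> K \<and> y = fmap l (fst p) (snd p)" if "y \<in> K" for y
    using inv that by fastforce
  define nx where "nx y = (SOME p. fst p \<in> {1..4} \<and> snd p \<in> K \<and> y = fmap l (fst p) (snd p))" for y
  have nx: "fst (nx y) \<in> {1..4} \<and> snd (nx y) \<in> K \<and> y = fmap l (fst (nx y)) (snd (nx y))" if "y \<in> K" for y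
    unfolding nx_def using someI_ex[OF ex[OF that]] .
  define ys where "ys = rec_nat x (\<lambda>_ y. snd (nx y))"
  have ys0: "ys 0 = x" and ysS: "ys (Suc n) = snd (nx (ys n))" for n by (simp_all add: ys_def)
  define c where "c n = fst (nx (ys n))" for n
  have ysK: "ys n \<in> K" for n by (induction n) (use xK nx in \<open>simp_all add: ys0 ysS\<close>)
  have cS: "c \<in> Sig" using nx ysK by (simp add: Sig_def c_def)
  have rep: "x = (\<Sum>j<n. l^j * tt l (c j)) + l^n * ys n" for n
  proof (induction n)
    case 0 then show ?case by (simp add: ys0)
  next
    case (Suc n)
    have "ys n = l * ys (Suc n) + tt l (c n)" using nx[OF ysK[of n]] by (simp add: ysS c_def fmap_eq)
    then show ?case using Suc by (simp add: algebra_simps)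
  qed
  have "(\<lambda>n. l^n * ys n) \<longlonglongrightarrow> 0"
  proof (rule Lim_null_comparison)
    show "\<forall>\<^sub>F n in sequentially. norm (l^n * ys n) \<le> M * l^n"
    proof (rule always_eventually, rule allI)
      fix n
      have "\<bar>ys n\<bar> \<le> M" using M ysK by blast
      then have "l^n * \<bar>ys n\<bar> \<le> l^n * M" using l0 by (intro mult_left_mono) simp_all
      then show "norm (l^n * ys n) \<le> M * l^n" using l0 by (simp add: abs_mult mult.commute)
    qed
    show "(\<lambda>n. M * l^n) \<longlonglongrightarrow> 0"
      using l0 lsmall[OF l0 l1] by (intro tendsto_mult_right_zero LIMSEQ_power_zero) simp
  qed
  then have "(\<lambda>n. x - l^n * ys n) \<longlonglongrightarrow> x - 0" by (intro tendsto_diff) simp_all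
  moreover have "(\<lambda>n. x - l^n * ys n) = (\<lambda>n. \<Sum>j<n. l^j * tt l (c j))" using rep by (simp add: fun_eq_iff algebra_simps)
  ultimately have "(\<lambda>n. \<Sum>j<n. l^j * tt l (c j)) \<longlonglongrightarrow> x" by simp
  then have "pp l c = x" unfolding pp_def using summ[OF l0 l1 cS] summable_LIMSEQ LIMSEQ_unique by blast
  then show "x \<in> pp l ` Sig" using cS by blast
qed

lemma into_sub:
  assumes cl: "closed K" and inv: "\<forall>i\<in>{1..4}. fmap l i ` K \<subseteq> K" and yK: "y \<in> K"
  shows "pp l ` Sig \<subseteq> K"
proof
  fix x assume "x \<in> pp l ` Sig"
  then obtain c where c: "c \<in> Sig" "x = pp l c" by auto
  define Z where "Z c n = (\<Sum>j<n. l^j * tt l (c j)) + l^n * y" for c n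
  have ZK: "\<forall>c\<in>Sig. Z c n \<in> K" for n
  proof (induction n)
    case 0 then show ?case using yK by (simp add: Z_def)
  next
    case (Suc n)
    show ?case
    proof
      fix c assume c: "c \<in> Sig"
      have "Z c (Suc n) = fmap l (c 0) (Z (shift 1 c) n)"
        unfolding Z_def fmap_eq
        by (subst sum.lessThan_Suc_shift) (simp add: shift_def sum_distrib_left algebra_simps)
      moreover have "Z (shift 1 c) n \<in> K" using Suc shift_Sig[OF c] by blast
      moreover have "c 0 \<in> {1..4}" using c by (simp add: Sig_def)
      ultimately show "Z c (Suc n) \<in> K" using inv by blast
    qed
  qed
  have "(\<lambda>n. Z c n) \<longlonglongrightarrow> pp l c + 0 * y" unfolding Z_def pp_def
    using summable_LIMSEQ[OF summ[OF l0 l1 c(1)]] l0 lsmall[OF l0 l1]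
    by (intro tendsto_add tendsto_mult LIMSEQ_power_zero) simp_all
  then show "x \<in> K" using closed_sequentially[OF cl, of "Z c" "pp l c"] ZK c by auto
qed

lemma attractor_eq: "attractor l = pp l ` Sig"
proof -
  let ?P = "pp l ` Sig"
  let ?Q = "\<lambda>K. compact K \<and> K \<noteq> {} \<and> K = (\<Union>i\<in>{1..4}. fmap l i ` K)"
  have bP: "bounded ?P"
    unfolding bounded_real
  proof (intro exI[of _ 1] ballI)
    fix x assume "x \<in> ?P"
    then obtain c where "c \<in> Sig" "x = pp l c" by blast
    then show "\<bar>x\<bar> \<le> 1" using pp_bounds[OF l0 l1] by simp
  qed
  have cont: "continuous_on S (fmap l i)" for S i unfolding fmap_fun by (intro continuous_intros)
  have ccl: "compact (closure ?P)" using bP by simp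
  have "compact (\<Union>i\<in>{1..4}. fmap l i ` closure ?P)"
    using ccl cont by (intro compact_UN compact_continuous_image) auto
  then have "closed (\<Union>i\<in>{1..4}. fmap l i ` closure ?P)" by (rule compact_imp_closed)
  moreover have "?P \<subseteq> (\<Union>i\<in>{1..4}. fmap l i ` closure ?P)"
  proof (rule ord_eq_le_trans[OF P_eq])
    show "(\<Union>i\<in>{1..4}. fmap l i ` ?P) \<subseteq> (\<Union>i\<in>{1..4}. fmap l i ` closure ?P)"
      by (intro UN_mono image_mono closure_subset order_refl)
  qed
  ultimately have "closure ?P \<subseteq> (\<Union>i\<in>{1..4}. fmap l i ` closure ?P)" by (rule closure_minimal[rotated])
  then have "closure ?P \<subseteq> ?P" using chain_sub bP by (simp add: bounded_closure)
  then have "closed ?P" using closure_subset_eq by blast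
  then have cP: "compact ?P" using bP by (simp add: compact_eq_bounded_closed)
  have "(\<lambda>_. 1) \<in> Sig" by (simp add: Sig_def)
  then have ne: "?P \<noteq> {}" by blast
  have QP: "?Q ?P" using cP ne P_eq by (intro conjI)
  have uniq: "K = ?P" if Q: "?Q K" for K
  proof
    have eK: "K = (\<Union>i\<in>{1..4}. fmap l i ` K)" using Q by (elim conjE)
    have cK: "compact K" using Q by (elim conjE)
    show "K \<subseteq> ?P" using compact_imp_bounded[OF cK] eq_refl[OF eK] by (rule chain_sub)
    from Q obtain y where "y \<in> K" by blast
    moreover have "\<forall>i\<in>{1..4}. fmap l i ` K \<subseteq> K"
    proof
      fix i :: nat assume "i \<in> {1..4}"
      then have "fmap l i ` K \<subseteq> (\<Union>i\<in>{1..4}. fmap l i ` K)" by blast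
      then show "fmap l i ` K \<subseteq> K" using eK by (rule ord_le_eq_trans[OF _ sym])
    qed
    ultimately show "?P \<subseteq> K" using compact_imp_closed[OF cK] by (intro into_sub)
  qed
  show ?thesis unfolding attractor_def using QP uniq by (rule the_equality)
qed

lemma Ufin_char: "x \<in> Ufin l k \<longleftrightarrow> (\<exists>c\<in>Sig. x = pp l c \<and> finite (Dset (Nf c)) \<and> card (Dset (Nf c)) = k)"
proof
  assume "x \<in> Ufin l k"
  then obtain c where c: "c \<in> Sig" "x = pp l c" "finite (codings l x)" "card (codings l x) = k"
    unfolding Ufin_def attractor_eq by blast
  then show "\<exists>c\<in>Sig. x = pp l c \<and> finite (Dset (Nf c)) \<and> card (Dset (Nf c)) = k"
    using codings_pp[OF l0 l1 c(1)] by auto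
next
  assume "\<exists>c\<in>Sig. x = pp l c \<and> finite (Dset (Nf c)) \<and> card (Dset (Nf c)) = k"
  then obtain c where c: "c \<in> Sig" "x = pp l c" "finite (Dset (Nf c))" "card (Dset (Nf c)) = k" by blast
  then show "x \<in> Ufin l k" unfolding Ufin_def attractor_eq using codings_pp[OF l0 l1 c(1)] by auto
qed

lemma Ufin_empty: assumes "0 < i" "\<not> (\<exists>k::nat. i = 2 ^ k)" shows "Ufin l i = {}"
proof -
  have False if "x \<in> Ufin l i" for x
  proof -
    from that[unfolded Ufin_char] obtain c where c: "c \<in> Sig" "finite (Dset (Nf c))" "card (Dset (Nf c)) = i"
      by blast
    have u: "Nf c \<in> Sig" "no31 (Nf c)" using c Nf_Sig Nf_no31 by auto
    show False
    proof (cases "finite (Pset (Nf c))")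
      case True then show False using Dset_card(1)[OF u] c assms(2) by auto
    next
      case False then show False using Dset_card(2)[OF u] c(2) countable_finite by blast
    qed
  qed
  then show ?thesis by blast
qed

lemma Ualeph0_empty: "Ualeph0 l = {}"
proof -
  have False if "x \<in> Ualeph0 l" for x
  proof -
    from that obtain c where c0: "c \<in> Sig" "x = pp l c" "countable (codings l x)" "infinite (codings l x)"
      unfolding Ualeph0_def attractor_eq by blast
    then have c: "c \<in> Sig" "x = pp l c" "countable (Dset (Nf c))" "infinite (Dset (Nf c))"
      using codings_pp[OF l0 l1 c0(1)] by auto
    have u: "Nf c \<in> Sig" "no31 (Nf c)" using c Nf_Sig Nf_no31 by auto
    show False
    proof (cases "finite (Pset (Nf c))")
      case True then show False using Dset_card(1)[OF u] c by auto
    next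
      case False then show False using Dset_card(2)[OF u] c by blast
    qed
  qed
  then show ?thesis by blast
qed

end


fun adm :: "nat list \<Rightarrow> bool" where
  "adm [] = True"
| "adm [a] = (a \<in> {1..4})"
| "adm (a # b # ws) = (a \<in> {1..4} \<and> okp a b \<and> adm (b # ws))"

definition Ext :: "nat \<Rightarrow> nat \<Rightarrow> nat list set" where
  "Ext a m = {ws. length ws = m \<and> adm (a # ws)}"

definition vv :: "nat \<Rightarrow> real" where "vv a = (if a = 1 \<or> a = 4 then sqrt 2 else 1)"
definition rho :: real where "rho = 2 + sqrt 2"

lemma adm_set: "adm ws \<Longrightarrow> set ws \<subseteq> {1..4}"
  by (induction ws rule: adm.induct) auto

lemma Ext_finite: "finite (Ext a m)"
proof (rule finite_subset)
  show "Ext a m \<subseteq> {xs. set xs \<subseteq> {1..4} \<and> length xs = m}"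
    using adm_set by (fastforce simp: Ext_def)
  show "finite {xs. set xs \<subseteq> {1..4::nat} \<and> length xs = m}" by (rule finite_lists_length_eq) simp
qed

lemma Ext_0: "a \<in> {1..4} \<Longrightarrow> Ext a 0 = {[]}" by (auto simp: Ext_def)

lemma Ext_Suc: assumes "a \<in> {1..4}"
  shows "Ext a (Suc m) = (\<Union>b\<in>{b\<in>{1..4}. okp a b}. (Cons b) ` Ext b m)"
proof
  show "Ext a (Suc m) \<subseteq> (\<Union>b\<in>{b\<in>{1..4}. okp a b}. (Cons b) ` Ext b m)"
  proof
    fix ws assume "ws \<in> Ext a (Suc m)"
    then obtain b zs where ws: "ws = b # zs" "length zs = m" "adm (a # b # zs)"
      by (cases ws) (auto simp: Ext_def)
    then have "b \<in> {1..4}" by (cases zs) auto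
    then show "ws \<in> (\<Union>b\<in>{b\<in>{1..4}. okp a b}. (Cons b) ` Ext b m)"
      using ws by (auto simp: Ext_def)
  qed
  show "(\<Union>b\<in>{b\<in>{1..4}. okp a b}. (Cons b) ` Ext b m) \<subseteq> Ext a (Suc m)"
    using assms by (auto simp: Ext_def)
qed

lemma card_Ext_Suc: assumes "a \<in> {1..4}"
  shows "card (Ext a (Suc m)) = (\<Sum>b\<in>{b\<in>{1..4}. okp a b}. card (Ext b m))"
proof -
  have "card (Ext a (Suc m)) = (\<Sum>b\<in>{b\<in>{1..4}. okp a b}. card ((Cons b) ` Ext b m))"
    unfolding Ext_Suc[OF assms] using Ext_finite by (intro card_UN_disjoint) auto
  also have "\<dots> = (\<Sum>b\<in>{b\<in>{1..4}. okp a b}. card (Ext b m))"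
    by (intro sum.cong refl card_image) simp
  finally show ?thesis .
qed

lemma rho_gt: "rho > 3" unfolding rho_def
proof -
  have "sqrt 2 > 1" by simp
  then show "2 + sqrt 2 > 3" by simp
qed

lemma vv_eigen: assumes "a \<in> {1..4}"
  shows "(\<Sum>b\<in>{b\<in>{1..4}. okp a b}. vv b) = rho * vv a"
proof -
  have s: "sqrt 2 * sqrt 2 = 2" by simp
  have "a = 1 \<or> a = 2 \<or> a = 3 \<or> a = 4" using assms by auto
  moreover have "{b\<in>{1..4}. okp 1 b} = {1,2,3,4}" by (auto simp: okp_def)
  moreover have "{b\<in>{1..4}. okp 4 b} = {1,2,3,4}" by (auto simp: okp_def)
  moreover have "{b\<in>{1..4}. okp 2 b} = {1,2,3}" by (auto simp: okp_def)
  moreover have "{b\<in>{1..4}. okp 3 b} = {2,3,4}" by (auto simp: okp_def)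
  ultimately show ?thesis using s by (auto simp: vv_def rho_def algebra_simps)
qed

lemma vv_bounds: "1 \<le> vv a" "vv a \<le> sqrt 2"
  by (auto simp: vv_def)

lemma cnt_upper: "a \<in> {1..4} \<Longrightarrow> real (card (Ext a m)) \<le> vv a * rho ^ m"
proof (induction m arbitrary: a)
  case 0 then show ?case using vv_bounds by (simp add: Ext_0)
next
  case (Suc m)
  have "real (card (Ext a (Suc m))) = (\<Sum>b\<in>{b\<in>{1..4}. okp a b}. real (card (Ext b m)))"
    using card_Ext_Suc[OF Suc.prems] by simp
  also have "\<dots> \<le> (\<Sum>b\<in>{b\<in>{1..4}. okp a b}. vv b * rho ^ m)"
    using Suc.IH by (intro sum_mono) auto
  also have "\<dots> = rho ^ m * (\<Sum>b\<in>{b\<in>{1..4}. okp a b}. vv b)"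
    by (simp add: sum_distrib_left mult.commute)
  also have "\<dots> = vv a * rho ^ Suc m" using vv_eigen[OF Suc.prems] by simp
  finally show ?case .
qed

lemma cnt_lower: "a \<in> {1..4} \<Longrightarrow> vv a * rho ^ m / sqrt 2 \<le> real (card (Ext a m))"
proof (induction m arbitrary: a)
  case 0 then show ?case using vv_bounds[of a] by (simp add: Ext_0)
next
  case (Suc m)
  have "vv a * rho ^ Suc m / sqrt 2 = rho ^ m / sqrt 2 * (\<Sum>b\<in>{b\<in>{1..4}. okp a b}. vv b)"
    using vv_eigen[OF Suc.prems] by simp
  also have "\<dots> = (\<Sum>b\<in>{b\<in>{1..4}. okp a b}. vv b * rho ^ m / sqrt 2)"
    by (simp add: sum_distrib_left sum_divide_distrib mult.commute)
  also have "\<dots> \<le> (\<Sum>b\<in>{b\<in>{1..4}. okp a b}. real (card (Ext b m)))"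
    using Suc.IH by (intro sum_mono) auto
  also have "\<dots> = real (card (Ext a (Suc m)))"
    using card_Ext_Suc[OF Suc.prems] by simp
  finally show ?case .
qed

lemma cnt_upper': "a \<in> {1..4} \<Longrightarrow> real (card (Ext a m)) \<le> sqrt 2 * rho ^ m"
  using cnt_upper[of a m] vv_bounds[of a] rho_gt
  by (meson mult_right_mono order_trans zero_le_power less_le_trans zero_less_numeral less_imp_le)

lemma cnt_lower': "a \<in> {1..4} \<Longrightarrow> rho ^ m / sqrt 2 \<le> real (card (Ext a m))"
proof -
  assume a: "a \<in> {1..4}"
  have "rho ^ m / sqrt 2 \<le> vv a * rho ^ m / sqrt 2"
    using vv_bounds[of a] rho_gt by (intro divide_right_mono) (simp_all add: mult_le_cancel_right1)
  then show ?thesis using cnt_lower[OF a, of m] by linarith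
qed

definition Wd :: "nat \<Rightarrow> nat list set" where "Wd n = {ws. length ws = n \<and> adm ws}"

lemma Wd_Suc: "Wd (Suc m) = (\<Union>a\<in>{1..4}. (Cons a) ` Ext a m)"
proof
  show "Wd (Suc m) \<subseteq> (\<Union>a\<in>{1..4}. (Cons a) ` Ext a m)"
  proof
    fix ws assume "ws \<in> Wd (Suc m)"
    then obtain a zs where ws: "ws = a # zs" "length zs = m" "adm (a # zs)"
      by (cases ws) (auto simp: Wd_def)
    then have "a \<in> {1..4}" by (cases zs) auto
    then show "ws \<in> (\<Union>a\<in>{1..4}. (Cons a) ` Ext a m)" using ws by (auto simp: Ext_def)
  qed
  show "(\<Union>a\<in>{1..4}. (Cons a) ` Ext a m) \<subseteq> Wd (Suc m)" by (auto simp: Ext_def Wd_def)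
qed

lemma Wd_finite: "finite (Wd n)"
proof (cases n)
  case 0 then show ?thesis by (simp add: Wd_def)
next
  case (Suc m) then show ?thesis using Ext_finite by (simp add: Wd_Suc)
qed

lemma Wd_upper: "real (card (Wd (Suc m))) \<le> 4 * sqrt 2 * rho ^ m"
proof -
  have "card (Wd (Suc m)) \<le> (\<Sum>a\<in>{1..4}. card ((Cons a) ` Ext a m))"
    unfolding Wd_Suc by (rule card_UN_le) simp
  also have "\<dots> = (\<Sum>a\<in>{1..4::nat}. card (Ext a m))"
    by (intro sum.cong refl card_image) simp
  finally have "real (card (Wd (Suc m))) \<le> (\<Sum>a\<in>{1..4::nat}. real (card (Ext a m)))"
    by (metis of_nat_le_iff of_nat_sum)
  also have "\<dots> \<le> (\<Sum>a\<in>{1..4::nat}. sqrt 2 * rho ^ m)"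
    by (intro sum_mono cnt_upper') simp
  also have "\<dots> = 4 * sqrt 2 * rho ^ m" by simp
  finally show ?thesis .
qed

lemma Wd_lower: "rho ^ m / sqrt 2 \<le> real (card (Wd (Suc m)))"
proof -
  have "(Cons 1) ` Ext 1 m \<subseteq> Wd (Suc m)" unfolding Wd_Suc by (rule UN_upper) simp
  then have "card ((Cons 1) ` Ext 1 m) \<le> card (Wd (Suc m))"
    using Wd_finite by (intro card_mono) auto
  moreover have "card ((Cons 1) ` Ext 1 m) = card (Ext 1 m)" by (rule card_image) simp
  ultimately show ?thesis using cnt_lower'[of 1 m] by simp
qed

lemma adm_append: "u \<noteq> [] \<Longrightarrow> adm (u @ z) \<longleftrightarrow> adm u \<and> adm (last u # z)"
proof (induction u rule: adm.induct)
  case 1 then show ?case by simp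
next
  case (2 a) then show ?case by (cases z) auto
next
  case (3 a b ws) then show ?case by auto
qed

lemma Wd_ext_card: assumes u: "adm u" "length u = n" "n \<ge> 1" and nN: "n \<le> N"
  shows "real (card {w \<in> Wd N. take n w = u}) \<le> sqrt 2 * rho ^ (N - n)"
proof -
  have ne: "u \<noteq> []" using u by auto
  have lu: "last u \<in> {1..4}" using adm_set[OF u(1)] last_in_set[OF ne] by blast
  have "{w \<in> Wd N. take n w = u} \<subseteq> (\<lambda>z. u @ z) ` Ext (last u) (N - n)"
  proof
    fix w assume w: "w \<in> {w \<in> Wd N. take n w = u}"
    then have "w = u @ drop n w" by (metis (mono_tags, lifting) append_take_drop_id mem_Collect_eq)
    moreover have "drop n w \<in> Ext (last u) (N - n)"
      using w adm_append[OF ne, of "drop n w"] calculation by (auto simp: Wd_def Ext_def)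
    ultimately show "w \<in> (\<lambda>z. u @ z) ` Ext (last u) (N - n)" by blast
  qed
  then have "card {w \<in> Wd N. take n w = u} \<le> card ((\<lambda>z. u @ z) ` Ext (last u) (N - n))"
    using Ext_finite by (intro card_mono) auto
  also have "\<dots> \<le> card (Ext (last u) (N - n))" by (rule card_image_le[OF Ext_finite])
  finally show ?thesis using cnt_upper'[OF lu, of "N - n"] by linarith
qed



lemma hcontrib_nonneg: "0 \<le> hcontrib s U" by (simp add: hcontrib_def)

lemma pre_mono: "A \<subseteq> B \<Longrightarrow> hausdorff_pre s \<delta> A \<le> hausdorff_pre s \<delta> B"
  unfolding hausdorff_pre_def by (rule INF_superset_mono) auto

lemma H_mono: "A \<subseteq> B \<Longrightarrow> hausdorff_measure s A \<le> hausdorff_measure s B"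
  unfolding hausdorff_measure_def by (intro SUP_mono') (rule pre_mono)

lemma H_zero_iff: "hausdorff_measure s A = 0 \<longleftrightarrow> (\<forall>\<delta>>0. hausdorff_pre s \<delta> A = 0)"
proof
  assume h: "hausdorff_measure s A = 0"
  show "\<forall>\<delta>>0. hausdorff_pre s \<delta> A = 0"
  proof (intro allI impI)
    fix \<delta> :: real assume "\<delta> > 0"
    then have "hausdorff_pre s \<delta> A \<le> hausdorff_measure s A"
      unfolding hausdorff_measure_def by (intro SUP_upper) simp
    then show "hausdorff_pre s \<delta> A = 0" using h by simp
  qed
next
  assume "\<forall>\<delta>>0. hausdorff_pre s \<delta> A = 0"
  then have "hausdorff_measure s A \<le> 0"
    unfolding hausdorff_measure_def by (intro SUP_least) simp
  then show "hausdorff_measure s A = 0" by simp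
qed

lemma lip_image:
  fixes h :: "real \<Rightarrow> real"
  assumes lip: "\<And>x y. \<bar>h x - h y\<bar> \<le> K * \<bar>x - y\<bar>" and K: "0 \<le> K" and b: "bounded U"
  shows "bounded (h ` U)" "diameter (h ` U) \<le> K * diameter U"
proof -
  obtain M where M: "\<forall>x\<in>U. \<bar>x\<bar> \<le> M" using b bounded_real by blast
  show "bounded (h ` U)"
  proof (cases "U = {}")
    case True then show ?thesis by simp
  next
    case False
    then obtain x0 where x0: "x0 \<in> U" by blast
    show ?thesis unfolding bounded_real
    proof (intro exI ballI)
      fix y assume "y \<in> h ` U"
      then obtain x where x: "x \<in> U" "y = h x" by blast
      have "\<bar>h x - h x0\<bar> \<le> K * \<bar>x - x0\<bar>" by (rule lip)
      also have "\<dots> \<le> K * (2 * M)"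
      proof (rule mult_left_mono[OF _ K])
        have "\<bar>x\<bar> \<le> M" "\<bar>x0\<bar> \<le> M" using M x x0 by auto
        then show "\<bar>x - x0\<bar> \<le> 2 * M" using abs_triangle_ineq4[of x x0] by linarith
      qed
      finally show "\<bar>y\<bar> \<le> \<bar>h x0\<bar> + K * (2 * M)" using x by linarith
    qed
  qed
  show "diameter (h ` U) \<le> K * diameter U"
  proof (rule diameter_le)
    show "h ` U \<noteq> {} \<or> 0 \<le> K * diameter U" using diameter_ge_0[OF b] K by simp
    fix x y assume "x \<in> h ` U" "y \<in> h ` U"
    then obtain x' y' where "x' \<in> U" "y' \<in> U" "x = h x'" "y = h y'" by blast
    moreover have "\<bar>x' - y'\<bar> \<le> diameter U" using diameter_bounded_bound[OF b \<open>x' \<in> U\<close> \<open>y' \<in> U\<close>]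
      by (simp add: dist_real_def)
    ultimately show "norm (x - y) \<le> K * diameter U"
    proof -
      assume a: "x' \<in> U" "y' \<in> U" "x = h x'" "y = h y'" and d: "\<bar>x' - y'\<bar> \<le> diameter U"
      have "K * \<bar>x' - y'\<bar> \<le> K * diameter U" using d K by (rule mult_left_mono)
      then show ?thesis using lip[of x' y'] a by simp
    qed
  qed
qed

lemma pre_lip:
  fixes h :: "real \<Rightarrow> real"
  assumes lip: "\<And>x y. \<bar>h x - h y\<bar> \<le> K * \<bar>x - y\<bar>" and K: "0 \<le> K" "K \<le> 1" and s: "0 \<le> s"
  shows "hausdorff_pre s \<delta> (h ` A) \<le> hausdorff_pre s \<delta> A"
  unfolding hausdorff_pre_def
proof (rule INF_mono)
  fix U :: "nat \<Rightarrow> real set" assume U: "U \<in> {U. A \<subseteq> (\<Union>i. U i) \<and> (\<forall>i. bounded (U i) \<and> diameter (U i) \<le> \<delta>)}"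
  let ?V = "\<lambda>i. h ` U i"
  have bU0: "bounded (U i)" for i using U by blast
  have b: "bounded (?V i)" "diameter (?V i) \<le> K * diameter (U i)" for i
    using lip_image[OF lip K(1) bU0[of i]] by blast+
  have dle: "diameter (?V i) \<le> diameter (U i)" for i
  proof -
    have bU: "bounded (U i)" using U by blast
    have "K * diameter (U i) \<le> diameter (U i)" using K diameter_ge_0[OF bU] by (simp add: mult_left_le_one_le)
    then show ?thesis using b(2)[of i] by linarith
  qed
  have hv: "hcontrib s (?V i) \<le> hcontrib s (U i)" for i
  proof -
    have d0: "0 \<le> diameter (?V i)" using diameter_ge_0[OF b(1)] .
    have "diameter (?V i) \<le> diameter (U i)" by (rule dle)
    then have "diameter (?V i) powr s \<le> diameter (U i) powr s" using d0 s by (intro powr_mono2)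
    then show ?thesis unfolding hcontrib_def by simp
  qed
  have mem: "?V \<in> {U. h ` A \<subseteq> (\<Union>i. U i) \<and> (\<forall>i. bounded (U i) \<and> diameter (U i) \<le> \<delta>)}"
  proof -
    have "diameter (?V i) \<le> \<delta>" for i
    proof -
      have "diameter (U i) \<le> \<delta>" using U by blast
      then show ?thesis using dle[of i] by linarith
    qed
    moreover have "h ` A \<subseteq> (\<Union>i. ?V i)" using U by blast
    ultimately show ?thesis using b(1) by blast
  qed
  have le: "(\<Sum>i. ennreal (hcontrib s (?V i))) \<le> (\<Sum>i. ennreal (hcontrib s (U i)))"
  proof (rule suminf_le)
    show "ennreal (hcontrib s (?V i)) \<le> ennreal (hcontrib s (U i))" for i using hv[of i] by (rule ennreal_leI)
  qed (rule summableI)+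
  show "\<exists>V\<in>{U. h ` A \<subseteq> (\<Union>i. U i) \<and> (\<forall>i. bounded (U i) \<and> diameter (U i) \<le> \<delta>)}.
      (\<Sum>i. ennreal (hcontrib s (V i))) \<le> (\<Sum>i. ennreal (hcontrib s (U i)))" using le mem by (rule bexI)
qed

lemma H_lip_zero:
  fixes h :: "real \<Rightarrow> real"
  assumes "\<And>x y. \<bar>h x - h y\<bar> \<le> K * \<bar>x - y\<bar>" "0 \<le> K" "K \<le> 1" "0 \<le> s"
    and "hausdorff_measure s A = 0"
  shows "hausdorff_measure s (h ` A) = 0"
proof -
  have "\<forall>\<delta>>0. hausdorff_pre s \<delta> A = 0" using assms(5) by (simp add: H_zero_iff)
  then have "\<forall>\<delta>>0. hausdorff_pre s \<delta> (h ` A) \<le> 0" using pre_lip[OF assms(1-4)] by metis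
  then show ?thesis unfolding H_zero_iff by simp
qed

lemma H_union_zero:
  fixes A :: "nat \<Rightarrow> real set"
  assumes z: "\<And>k. hausdorff_measure s (A k) = 0"
  shows "hausdorff_measure s (\<Union>k. A k) = 0"
  unfolding H_zero_iff
proof (intro allI impI)
  fix \<delta> :: real assume d: "\<delta> > 0"
  let ?Cov = "\<lambda>B. {U :: nat \<Rightarrow> real set. B \<subseteq> (\<Union>i. U i) \<and> (\<forall>i. bounded (U i) \<and> diameter (U i) \<le> \<delta>)}"
  have eps: "hausdorff_pre s \<delta> (\<Union>k. A k) \<le> 0 + ennreal e" if e: "0 < e" for e :: real
  proof -
    have ex: "\<exists>U\<in>?Cov (A k). (\<Sum>i. ennreal (hcontrib s (U i))) < ennreal (e / 2 ^ Suc k)" for k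
    proof -
      have "hausdorff_pre s \<delta> (A k) = 0" using z d H_zero_iff by blast
      then have "hausdorff_pre s \<delta> (A k) < ennreal (e / 2 ^ Suc k)" using e by simp
      then show ?thesis unfolding hausdorff_pre_def INF_less_iff .
    qed
    have SS: "(\<lambda>k. e / 2 ^ Suc k) sums e"
    proof -
      have "(\<lambda>k. e / 2 ^ Suc k) = (\<lambda>k. (e/2) * (1/2) ^ k)" by (simp add: fun_eq_iff power_one_over)
      moreover have "(\<lambda>k. (e/2) * (1/2::real) ^ k) sums ((e/2) * (1 / (1 - 1/2)))"
        by (intro sums_mult geometric_sums) simp
      ultimately show ?thesis by simp
    qed
    define Good where "Good k U \<longleftrightarrow> U \<in> ?Cov (A k) \<and> (\<Sum>i. ennreal (hcontrib s (U i))) < ennreal (e / 2 ^ Suc k)"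
      for k and U :: "nat \<Rightarrow> real set"
    have "\<forall>k. \<exists>U. Good k U" using ex unfolding Good_def by blast
    then have "\<exists>UU. \<forall>k. Good k (UU k)" by (rule choice)
    then obtain UU where G: "\<forall>k. Good k (UU k)" by (elim exE)
    have UU: "\<And>k. UU k \<in> ?Cov (A k)"
      "\<And>k. (\<Sum>i. ennreal (hcontrib s (UU k i))) < ennreal (e / 2 ^ Suc k)"
    proof -
      fix k
      have "Good k (UU k)" using G by (rule spec)
      then show "UU k \<in> ?Cov (A k)" unfolding Good_def by (rule conjunct1)
    next
      fix k
      have "Good k (UU k)" using G by (rule spec)
      then show "(\<Sum>i. ennreal (hcontrib s (UU k i))) < ennreal (e / 2 ^ Suc k)" unfolding Good_def by (rule conjunct2)
    qed
    define V where "V n = UU (fst (prod_decode n)) (snd (prod_decode n))" for n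
    have "V \<in> ?Cov (\<Union>k. A k)"
    proof -
      have "(\<Union>k. A k) \<subseteq> (\<Union>n. V n)"
      proof
        fix x assume "x \<in> (\<Union>k. A k)"
        then obtain k where "x \<in> A k" by blast
        then obtain i where "x \<in> UU k i" using UU(1)[of k] by blast
        moreover have "V (prod_encode (k, i)) = UU k i" by (simp add: V_def)
        ultimately show "x \<in> (\<Union>n. V n)" by (metis UN_I UNIV_I)
      qed
      moreover have "bounded (V n) \<and> diameter (V n) \<le> \<delta>" for n
        using UU(1)[of "fst (prod_decode n)"] unfolding V_def by blast
      ultimately show ?thesis by blast
    qed
    then have "hausdorff_pre s \<delta> (\<Union>k. A k) \<le> (\<Sum>n. ennreal (hcontrib s (V n)))"
      unfolding hausdorff_pre_def by (rule INF_lower)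
    also have "(\<Sum>n. ennreal (hcontrib s (V n))) = (\<Sum>k. \<Sum>i. ennreal (hcontrib s (UU k i)))"
      unfolding V_def
      by (rule suminf_ennreal_2dimen[where f="\<lambda>p. ennreal (hcontrib s (UU (fst p) (snd p)))"
          and g="\<lambda>k. \<Sum>i. ennreal (hcontrib s (UU k i))", simplified])
    also have "\<dots> \<le> (\<Sum>k. ennreal (e / 2 ^ Suc k))"
      by (intro suminf_le summableI less_imp_le UU(2))
    also have "\<dots> = ennreal (\<Sum>k. e / 2 ^ Suc k)"
      using e sums_summable[OF SS] by (intro suminf_ennreal2) simp_all
    also have "(\<Sum>k. e / 2 ^ Suc k) = e" using SS by (simp add: sums_iff)
    finally show ?thesis by simp
  qed
  have "hausdorff_pre s \<delta> (\<Union>k. A k) \<le> 0"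
  proof (rule ennreal_le_epsilon)
    fix e :: real assume "0 < e" then show "hausdorff_pre s \<delta> (\<Union>k. A k) \<le> 0 + ennreal e" by (rule eps)
  qed
  then show "hausdorff_pre s \<delta> (\<Union>k. A k) = 0" by simp
qed

lemma H0_pos: assumes "A \<noteq> {}" "\<delta> > 0" shows "hausdorff_pre 0 \<delta> A \<ge> 1"
  unfolding hausdorff_pre_def
proof (rule INF_greatest)
  fix U :: "nat \<Rightarrow> real set" assume U: "U \<in> {U. A \<subseteq> (\<Union>i. U i) \<and> (\<forall>i. bounded (U i) \<and> diameter (U i) \<le> \<delta>)}"
  obtain x where "x \<in> A" using assms by blast
  then obtain i where i: "x \<in> U i" using U by blast
  have "ennreal (hcontrib 0 (U i)) \<le> (\<Sum>i. ennreal (hcontrib 0 (U i)))"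
    using sum_le_suminf[of "\<lambda>i. ennreal (hcontrib 0 (U i))" "{i}"] by (simp add: summableI)
  moreover have "hcontrib 0 (U i) = 1" using i by (auto simp: hcontrib_def)
  ultimately show "1 \<le> (\<Sum>i. ennreal (hcontrib 0 (U i)))" by simp
qed

lemma dim_eq:
  assumes s0: "0 \<le> s0" and up: "\<And>s. s > s0 \<Longrightarrow> hausdorff_measure s X = 0"
    and low: "\<And>s. 0 \<le> s \<Longrightarrow> s \<le> s0 \<Longrightarrow> hausdorff_measure s X \<noteq> 0"
  shows "hausdorff_dim X = s0"
proof -
  have "{s. 0 \<le> s \<and> hausdorff_measure s X = 0} = {s0<..}"
  proof (auto simp: up)
    fix s assume "0 \<le> s" "hausdorff_measure s X = 0"
    then show "s0 < s" using low by force
  next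
    fix s assume "s0 < s" then show "0 \<le> s" using s0 by simp
  qed
  then show ?thesis unfolding hausdorff_dim_def by simp
qed



definition SigA :: "(nat \<Rightarrow> nat) set" where
  "SigA = {c \<in> Sig. \<forall>n. okp (c n) (c (Suc n))}"
definition cyl :: "(nat \<Rightarrow> nat) \<Rightarrow> nat \<Rightarrow> (nat \<Rightarrow> nat) set" where
  "cyl c n = {d. \<forall>j<n. d j = c j}"
definition pref :: "nat \<Rightarrow> (nat \<Rightarrow> nat) \<Rightarrow> nat list" where
  "pref n c = map c [0..<n]"
definition extw :: "nat list \<Rightarrow> nat \<Rightarrow> nat" where
  "extw ws = (\<lambda>n. if n < length ws then ws ! n else 2)"

lemma SigA_Sig: "c \<in> SigA \<Longrightarrow> c \<in> Sig" by (simp add: SigA_def)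
lemma SigA_shift: "c \<in> SigA \<Longrightarrow> shift m c \<in> SigA" by (simp add: SigA_def Sig_def shift_def)
lemma SigA_no31: "c \<in> SigA \<Longrightarrow> no31 c" by (simp add: SigA_def no31_def okp_def)
lemma const2_SigA: "(\<lambda>_. 2) \<in> SigA" by (simp add: SigA_def Sig_def okp_def)

lemma adm_seq: assumes c: "c \<in> SigA" shows "adm (map c [i..<i+n])"
proof (induction n arbitrary: i)
  case 0 then show ?case by simp
next
  case (Suc n)
  have ci: "c i \<in> {1..4}" "okp (c i) (c (Suc i))" using c by (auto simp: SigA_def Sig_def)
  have "[i..<i+Suc n] = i # [Suc i..<i+Suc n]" by (rule upt_conv_Cons) simp
  then have e: "map c [i..<i+Suc n] = c i # map c [Suc i..<Suc i+n]" by simp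
  show ?case
  proof (cases n)
    case 0 then show ?thesis unfolding e using ci \<open>n = 0\<close> by simp
  next
    case (Suc n')
    have "[Suc i..<Suc i+n] = Suc i # [Suc (Suc i)..<Suc i+n]" by (rule upt_conv_Cons) (simp add: Suc)
    then have "map c [Suc i..<Suc i+n] = c (Suc i) # map c [Suc (Suc i)..<Suc (Suc i)+n']"
      using Suc by simp
    then show ?thesis unfolding e using ci Suc.IH[of "Suc i"] by simp
  qed
qed

lemma pref_adm: "c \<in> SigA \<Longrightarrow> adm (pref n c)"
  using adm_seq[of c 0 n] by (simp add: pref_def)

lemma pref_Wd: "c \<in> SigA \<Longrightarrow> pref n c \<in> Wd n"
  using pref_adm by (simp add: Wd_def pref_def)

lemma pref_eq_iff: "pref n c = pref n d \<longleftrightarrow> (\<forall>j<n. c j = d j)"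
  unfolding pref_def map_eq_conv by auto

lemma adm_nth: "adm ws \<Longrightarrow> Suc n < length ws \<Longrightarrow> okp (ws ! n) (ws ! Suc n)"
proof (induction ws arbitrary: n rule: adm.induct)
  case (3 a b ws) then show ?case by (cases n) auto
qed auto

lemma extw_SigA: assumes "adm ws" shows "extw ws \<in> SigA"
proof -
  have s: "set ws \<subseteq> {1..4}" using adm_set[OF assms] .
  have "extw ws n \<in> {1..4}" for n
  proof (cases "n < length ws")
    case True then have "ws ! n \<in> set ws" by (rule nth_mem)
    then have "ws ! n \<in> {1..4}" using s by blast
    then show ?thesis using True by (simp add: extw_def)
  qed (simp add: extw_def)
  moreover have "okp (extw ws n) (extw ws (Suc n))" for n
  proof (cases "Suc n < length ws")
    case True then show ?thesis using adm_nth[OF assms True] by (simp add: extw_def)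
  next
    case False then show ?thesis by (auto simp: extw_def okp_def)
  qed
  ultimately show ?thesis by (simp add: SigA_def Sig_def)
qed

lemma pref_extw: "pref (length ws) (extw ws) = ws"
  by (rule nth_equalityI) (simp_all add: pref_def extw_def)

lemma open_fix: "finite I \<Longrightarrow> open {f :: nat \<Rightarrow> nat. \<forall>i\<in>I. f i = w i}"
  using product_topology_basis'[of I "\<lambda>i. {w i}" "\<lambda>i. i"] by (simp add: open_discrete)

lemma cyl_open: "open (cyl c n)"
proof -
  have "cyl c n = {f. \<forall>i\<in>{..<n}. f i = c i}" by (auto simp: cyl_def)
  then show ?thesis using open_fix[of "{..<n}" c] by simp
qed

lemma SigA_compact: "compact SigA"
proof -
  have "compactin (product_topology (\<lambda>i. euclidean) UNIV) (PiE UNIV (\<lambda>_. {1..4::nat}))"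
    by (simp add: compactin_PiE finite_imp_compact)
  then have cS: "compact (PiE UNIV (\<lambda>_. {1..4::nat}))" by (simp add: euclidean_product_topology)
  have SigPi: "Sig = PiE UNIV (\<lambda>_. {1..4::nat})" by (auto simp: Sig_def PiE_def Pi_def)
  have cl: "closed {c :: nat \<Rightarrow> nat. okp (c n) (c (Suc n))}" for n
  proof -
    have "- {c :: nat \<Rightarrow> nat. okp (c n) (c (Suc n))}
       = {f. \<forall>i\<in>{n, Suc n}. f i = (\<lambda>i. if i = n then 2 else 4) i}
       \<union> {f. \<forall>i\<in>{n, Suc n}. f i = (\<lambda>i. if i = n then 3 else 1) i}"
      by (auto simp: okp_def)
    moreover have "open \<dots>" by (intro open_Un open_fix) simp_all
    ultimately show ?thesis by (simp add: closed_def)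
  qed
  have e: "SigA = Sig \<inter> (\<Inter>n. {c. okp (c n) (c (Suc n))})" by (auto simp: SigA_def)
  have "closed (\<Inter>n. {c :: nat \<Rightarrow> nat. okp (c n) (c (Suc n))})" using cl by (intro closed_INT) auto
  moreover have "compact Sig" unfolding SigPi by (rule cS)
  ultimately show ?thesis unfolding e by (intro compact_Int_closed)
qed



definition gg :: "real \<Rightarrow> real" where "gg l = min (min l (l - 3*(l*l) + l*(l*l))) (1 - 5*l + l*l)"

context
  fixes l :: real
  assumes l0: "0 < l" and l1: "l < (5 - sqrt 21) / 2"
begin

lemma lf: "l < 21/100" "0 \<le> l*l" "l*l \<le> 21/100 * l" "0 \<le> l*(l*l)" "1 - 5*l + l*l > 0"
proof -
  show a: "l < 21/100" by (rule lsmall[OF l0 l1])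
  show "0 \<le> l*l" by simp
  show "l*l \<le> 21/100 * l" using a l0 by (intro mult_right_mono) simp_all
  show "0 \<le> l*(l*l)" using l0 by simp
  show "1 - 5*l + l*l > 0" using lquad[OF l0 l1] by (simp add: power2_eq_square)
qed

lemma gg_props: "0 < gg l" "gg l \<le> l" "gg l \<le> l - 3*(l*l) + l*(l*l)" "gg l \<le> 1 - 5*l + l*l"
proof -
  have "l - 3*(l*l) + l*(l*l) = l * (1 - 3*l + l*l)" by (simp add: algebra_simps)
  moreover have "1 - 3*l + l*l > 0" using lf by linarith
  ultimately have p: "l - 3*(l*l) + l*(l*l) > 0" using l0 by simp
  show "0 < gg l" using p l0 lf(5) by (simp add: gg_def)
  show "gg l \<le> l" "gg l \<le> l - 3*(l*l) + l*(l*l)" "gg l \<le> 1 - 5*l + l*l" by (simp_all add: gg_def)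
qed

lemma pp_casesA: assumes c: "c \<in> SigA"
  shows "(c 0 = 1 \<and> 0 \<le> pp l c \<and> pp l c \<le> l)
       \<or> (c 0 = 2 \<and> 2*l \<le> pp l c \<and> pp l c \<le> 2*l + 4*(l*l) - l*(l*l))
       \<or> (c 0 = 3 \<and> 3*l + l*l \<le> pp l c \<and> pp l c \<le> 4*l - l*l)
       \<or> (c 0 = 4 \<and> 1 - l \<le> pp l c \<and> pp l c \<le> 1)"
proof -
  have cS: "c \<in> Sig" using c by (rule SigA_Sig)
  have s1: "shift 1 c \<in> Sig" by (rule shift_Sig[OF cS])
  have ok: "okp (c 0) (c 1)" using c by (simp add: SigA_def)
  have h1: "shift 1 c 0 = c 1" by (simp add: shift_def)
  have pc: "pp l c = tt l (c 0) + l * pp l (shift 1 c)" by (rule pp_cons[OF l0 l1 cS])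
  have tv: "tt l 1 = 0" "tt l 2 = 2*l" "tt l 3 = 3*l - l*l" "tt l 4 = 1 - l"
    using tt_vals[OF l0 l1] by (simp_all add: power2_eq_square)
  have b: "0 \<le> pp l c" "pp l c \<le> 1" using pp_bounds[OF l0 l1 cS] by auto
  have bY: "0 \<le> pp l (shift 1 c)" "pp l (shift 1 c) \<le> 1" using pp_bounds[OF l0 l1 s1] by auto
  have cc: "(c 1 = 1 \<and> pp l (shift 1 c) \<le> l) \<or> (c 1 = 2 \<and> 2*l \<le> pp l (shift 1 c) \<and> pp l (shift 1 c) \<le> 3*l)
       \<or> (c 1 = 3 \<and> 3*l - l*l \<le> pp l (shift 1 c) \<and> pp l (shift 1 c) \<le> 4*l - l*l) \<or> (c 1 = 4 \<and> 1 - l \<le> pp l (shift 1 c))"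
    using pp_cases[OF l0 l1 s1] h1 by simp
  have c0: "(c 0 = 1 \<and> pp l c \<le> l) \<or> (c 0 = 2 \<and> 2*l \<le> pp l c \<and> pp l c \<le> 3*l)
       \<or> (c 0 = 3 \<and> 3*l - l*l \<le> pp l c \<and> pp l c \<le> 4*l - l*l) \<or> (c 0 = 4 \<and> 1 - l \<le> pp l c)"
    by (rule pp_cases[OF l0 l1 cS])
  have two: "pp l c \<le> 2*l + 4*(l*l) - l*(l*l)" if "c 0 = 2"
  proof -
    have "c 1 \<noteq> 4" using ok that by (simp add: okp_def)
    then have "pp l (shift 1 c) \<le> 4*l - l*l" using cc lf l0 by (elim disjE conjE; linarith)
    then have "l * pp l (shift 1 c) \<le> l * (4*l - l*l)" using l0 by (intro mult_left_mono) simp_all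
    then show ?thesis using pc that tv by (simp add: algebra_simps)
  qed
  have three: "3*l + l*l \<le> pp l c" if "c 0 = 3"
  proof -
    have "c 1 \<noteq> 1" using ok that by (simp add: okp_def)
    then have "2*l \<le> pp l (shift 1 c)" using cc lf l0 by (elim disjE conjE; linarith)
    then have "l * (2*l) \<le> l * pp l (shift 1 c)" using l0 by (intro mult_left_mono) simp_all
    then show ?thesis using pc that tv by (simp add: algebra_simps)
  qed
  show ?thesis using c0 two three b by auto
qed

lemma sep0: assumes c: "c \<in> SigA" and d: "d \<in> SigA" and ne: "c 0 \<noteq> d 0"
  shows "gg l \<le> \<bar>pp l c - pp l d\<bar>"
proof -
  note g = gg_props
  have "gg l \<le> pp l c - pp l d \<or> gg l \<le> pp l d - pp l c"
    using pp_casesA[OF c] pp_casesA[OF d] ne g lf l0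
    by (elim disjE conjE; linarith)
  then show ?thesis by linarith
qed

lemma pp_split: assumes "c \<in> Sig" "d \<in> Sig" "\<forall>j<m. c j = d j"
  shows "pp l c - pp l d = l^m * (pp l (shift m c) - pp l (shift m d))"
proof -
  have "(\<Sum>j<m. l^j * tt l (c j)) = (\<Sum>j<m. l^j * tt l (d j))" using assms(3) by (intro sum.cong) auto
  then show ?thesis using pp_shift[OF l0 l1 assms(1), of m] pp_shift[OF l0 l1 assms(2), of m]
    by (simp add: algebra_simps)
qed

lemma sep: assumes c: "c \<in> SigA" and d: "d \<in> SigA" and eq: "\<forall>j<m. c j = d j" and ne: "c m \<noteq> d m"
  shows "gg l * l^m \<le> \<bar>pp l c - pp l d\<bar>"
proof -
  have "gg l \<le> \<bar>pp l (shift m c) - pp l (shift m d)\<bar>"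
    using sep0[OF SigA_shift[OF c] SigA_shift[OF d]] ne by (simp add: shift_def)
  then have "l^m * gg l \<le> l^m * \<bar>pp l (shift m c) - pp l (shift m d)\<bar>" using l0 by (intro mult_left_mono) simp_all
  also have "\<dots> = \<bar>pp l c - pp l d\<bar>"
    using pp_split[OF SigA_Sig[OF c] SigA_Sig[OF d] eq] l0 by (simp add: abs_mult)
  finally show ?thesis by (simp add: mult.commute)
qed

lemma sameprefix: assumes "c \<in> Sig" "d \<in> Sig" "\<forall>j<n. c j = d j"
  shows "\<bar>pp l c - pp l d\<bar> \<le> l^n"
proof -
  have "\<bar>pp l (shift n c) - pp l (shift n d)\<bar> \<le> 1"
    using pp_bounds[OF l0 l1 shift_Sig[OF assms(1), of n]] pp_bounds[OF l0 l1 shift_Sig[OF assms(2), of n]] by linarith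
  then have "l^n * \<bar>pp l (shift n c) - pp l (shift n d)\<bar> \<le> l^n * 1" using l0 by (intro mult_left_mono) simp_all
  then show ?thesis using pp_split[OF assms] l0 by (simp add: abs_mult)
qed

lemma pp_inj_A: "c \<in> SigA \<Longrightarrow> d \<in> SigA \<Longrightarrow> pp l c = pp l d \<Longrightarrow> c = d"
  using pp_inj_no31[OF l0 l1] SigA_Sig SigA_no31 by blast

lemma one_cyl:
  assumes b: "bounded U" and c0: "c0 \<in> SigA" "pp l c0 \<in> U" and n: "1 \<le> n"
    and dm: "diameter U < gg l * l^(n-1)" and d: "d \<in> SigA" "pp l d \<in> U"
  shows "d \<in> cyl c0 n"
proof (rule ccontr)
  assume "d \<notin> cyl c0 n"
  then have ex: "\<exists>j. j < n \<and> d j \<noteq> c0 j" by (auto simp: cyl_def)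
  define m where "m = (LEAST j. j < n \<and> d j \<noteq> c0 j)"
  have m: "m < n" "d m \<noteq> c0 m" using LeastI_ex[OF ex] by (simp_all add: m_def)
  have eq: "\<forall>j<m. d j = c0 j"
  proof (intro allI impI)
    fix j assume "j < m"
    then have "\<not> (j < n \<and> d j \<noteq> c0 j)" unfolding m_def by (rule not_less_Least)
    then show "d j = c0 j" using \<open>j < m\<close> m(1) by simp
  qed
  have "gg l * l^m \<le> \<bar>pp l d - pp l c0\<bar>" by (rule sep[OF d(1) c0(1) eq m(2)])
  also have "\<dots> \<le> diameter U" using diameter_bounded_bound[OF b d(2) c0(2)] by (simp add: dist_real_def)
  also have "\<dots> < gg l * l^(n-1)" by (rule dm)
  also have "\<dots> \<le> gg l * l^m"
    using gg_props(1) l0 lf(1) m(1) by (intro mult_left_mono power_decreasing) simp_all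
  finally show False by simp
qed

end


definition s0 :: "real \<Rightarrow> real" where "s0 l = ln rho / (- ln l)"

lemma powr_pow: "0 < (x::real) \<Longrightarrow> (x ^ n) powr s = (x powr s) ^ n"
proof -
  assume x: "0 < x"
  have "(x ^ n) powr s = (x powr real n) powr s" using powr_realpow[OF x, of n] by simp
  also have "\<dots> = x powr (real n * s)" by (rule powr_powr)
  also have "\<dots> = (x powr s) ^ n" using powr_power[of x s n] x by simp
  finally show ?thesis .
qed

context
  fixes l :: real
  assumes l0: "0 < l" and l1: "l < (5 - sqrt 21) / 2"
begin

lemma ln_l_neg: "ln l < 0" using l0 lf(1)[OF l0 l1] by simp

lemma s0_pos: "s0 l > 0"
proof -
  have "ln rho > 0" using rho_gt by simp
  then show ?thesis using ln_l_neg by (simp add: s0_def divide_pos_neg)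
qed

lemma lpow_s0: "l powr (s0 l) = 1 / rho"
proof -
  have "s0 l * ln l = - ln rho" using ln_l_neg by (simp add: s0_def field_simps)
  then have "l powr (s0 l) = exp (- ln rho)" using l0 by (simp add: powr_def mult.commute)
  also have "\<dots> = 1 / rho" using rho_gt by (simp add: exp_minus inverse_eq_divide)
  finally show ?thesis .
qed

lemma lpow_ge: "s \<le> s0 l \<Longrightarrow> 1 / rho \<le> l powr s"
  using powr_mono'[of s "s0 l" l] l0 lf(1)[OF l0 l1] lpow_s0 by simp

lemma lpow_lt: "s0 l < s \<Longrightarrow> l powr s < 1 / rho"
  using powr_less_mono'[of l "s0 l" s] l0 lf(1)[OF l0 l1] lpow_s0 by simp

lemma E_upper: assumes s: "s > s0 l" shows "hausdorff_measure s (pp l ` SigA) = 0"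
  unfolding H_zero_iff
proof (intro allI impI)
  fix \<delta> :: real assume \<delta>: "\<delta> > 0"
  have s_pos: "s > 0" using s s0_pos by linarith
  have rg: "rho > 3" by (rule rho_gt)
  define q where "q = rho * l powr s"
  have lps: "0 < l powr s" "l powr s < 1 / rho" using l0 lpow_lt[OF s] by simp_all
  have q: "0 < q" "q < 1" using lps rg by (simp_all add: q_def field_simps)
  have lps1: "l powr s \<le> 1" using lps rg by (smt (verit, best) divide_less_eq_1_pos)
  have main: "hausdorff_pre s \<delta> (pp l ` SigA) \<le> 0 + ennreal e" if e: "0 < e" for e :: real
  proof -
    obtain n1 where n1: "q ^ n1 < e / (4 * sqrt 2)" using real_arch_pow_inv[of "e/(4 * sqrt 2)" q] e q by auto
    obtain n2 where n2: "l ^ n2 < \<delta>" using real_arch_pow_inv[of \<delta> l] \<delta> lf(1)[OF l0 l1] by auto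
    define m where "m = n1 + n2"
    define n where "n = Suc m"
    define U where "U i = pp l ` {c \<in> SigA. to_nat (pref n c) = i}" for i
    have cover: "pp l ` SigA \<subseteq> (\<Union>i. U i)" by (auto simp: U_def)
    have bU: "bounded (U i)" for i
    proof (rule bounded_subset)
      show "bounded {0..1::real}" by simp
      show "U i \<subseteq> {0..1}" using pp_bounds[OF l0 l1] SigA_Sig by (auto simp: U_def)
    qed
    have lnd: "l^n \<le> \<delta>"
    proof -
      have "l^n \<le> l^n2" using l0 lf(1)[OF l0 l1] by (intro power_decreasing) (simp_all add: n_def m_def)
      then show ?thesis using n2 by simp
    qed
    have dU: "diameter (U i) \<le> l^n" for i
    proof (rule diameter_le)
      show "U i \<noteq> {} \<or> 0 \<le> l^n" using l0 by simp
      fix x y assume "x \<in> U i" "y \<in> U i"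
      then obtain c d where cd: "c \<in> SigA" "d \<in> SigA" "to_nat (pref n c) = i" "to_nat (pref n d) = i"
        "x = pp l c" "y = pp l d" by (auto simp: U_def)
      then have "pref n c = pref n d" using inj_to_nat by (metis injD)
      then have "\<forall>j<n. c j = d j" by (simp add: pref_eq_iff)
      then show "norm (x - y) \<le> l^n" using sameprefix[OF l0 l1 SigA_Sig[OF cd(1)] SigA_Sig[OF cd(2)]] cd by simp
    qed
    define f where "f i = (if i \<in> to_nat ` Wd n then (l powr s) ^ n else 0)" for i
    have hc: "hcontrib s (U i) \<le> f i" for i
    proof (cases "U i = {}")
      case True then show ?thesis using lps by (simp add: hcontrib_def f_def)
    next
      case False
      then obtain c where c: "c \<in> SigA" "to_nat (pref n c) = i" by (auto simp: U_def)
      then have iW: "i \<in> to_nat ` Wd n" using pref_Wd by blast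
      have "diameter (U i) powr s \<le> (l^n) powr s"
        using dU[of i] diameter_ge_0[OF bU] s_pos by (intro powr_mono2) simp_all
      then show ?thesis using False s_pos iW by (simp add: hcontrib_def f_def powr_pow[OF l0])
    qed
    have "U \<in> {U. pp l ` SigA \<subseteq> (\<Union>i. U i) \<and> (\<forall>i. bounded (U i) \<and> diameter (U i) \<le> \<delta>)}"
      using cover bU dU lnd by (simp add: order_trans[OF dU lnd])
    then have "hausdorff_pre s \<delta> (pp l ` SigA) \<le> (\<Sum>i. ennreal (hcontrib s (U i)))"
      unfolding hausdorff_pre_def by (rule INF_lower)
    also have "\<dots> \<le> (\<Sum>i. ennreal (f i))"
    proof (rule suminf_le)
      show "ennreal (hcontrib s (U i)) \<le> ennreal (f i)" for i using hc[of i] by (rule ennreal_leI)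
    qed (rule summableI)+
    also have "(\<Sum>i. ennreal (f i)) = (\<Sum>i\<in>to_nat ` Wd n. ennreal (f i))"
      by (rule suminf_finite) (simp_all add: Wd_finite f_def)
    also have "\<dots> = ennreal (\<Sum>i\<in>to_nat ` Wd n. f i)"
      using lps by (intro sum_ennreal) (simp add: f_def)
    finally have A: "hausdorff_pre s \<delta> (pp l ` SigA) \<le> ennreal (\<Sum>i\<in>to_nat ` Wd n. f i)" .
    have "(\<Sum>i\<in>to_nat ` Wd n. f i) = real (card (Wd n)) * (l powr s) ^ n"
    proof -
      have "(\<Sum>i\<in>to_nat ` Wd n. f i) = (\<Sum>i\<in>to_nat ` Wd n. (l powr s) ^ n)" by (intro sum.cong) (simp_all add: f_def)
      also have "\<dots> = real (card (to_nat ` Wd n)) * (l powr s) ^ n" by simp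
      also have "card (to_nat ` Wd n) = card (Wd n)" by (rule card_image) (meson inj_on_subset inj_to_nat subset_UNIV)
      finally show ?thesis .
    qed
    also have "real (card (Wd n)) * (l powr s) ^ n \<le> 4 * sqrt 2 * rho ^ m * (l powr s) ^ m"
    proof -
      have "real (card (Wd n)) \<le> 4 * sqrt 2 * rho ^ m" unfolding n_def by (rule Wd_upper)
      moreover have "(l powr s) ^ n \<le> (l powr s) ^ m"
        using lps lps1 by (intro power_decreasing) (simp_all add: n_def)
      moreover have "0 \<le> rho ^ m" using rg by simp
      ultimately show ?thesis using lps by (intro mult_mono) simp_all
    qed
    also have "4 * sqrt 2 * rho ^ m * (l powr s) ^ m = 4 * sqrt 2 * q ^ m"
      by (simp add: q_def power_mult_distrib)
    also have "\<dots> \<le> 4 * sqrt 2 * q ^ n1"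
      using q by (intro mult_left_mono power_decreasing) (simp_all add: m_def)
    also have "\<dots> < e" using n1 by (simp add: field_simps)
    finally have "(\<Sum>i\<in>to_nat ` Wd n. f i) \<le> e" by simp
    then show ?thesis using A by (metis add_0 ennreal_leI order_trans)
  qed
  have "hausdorff_pre s \<delta> (pp l ` SigA) \<le> 0"
  proof (rule ennreal_le_epsilon)
    fix e :: real assume "0 < e" then show "hausdorff_pre s \<delta> (pp l ` SigA) \<le> 0 + ennreal e" by (rule main)
  qed
  then show "hausdorff_pre s \<delta> (pp l ` SigA) = 0" by simp
qed

end


context
  fixes l :: real
  assumes l0: "0 < l" and l1: "l < (5 - sqrt 21) / 2"
begin

lemma SL2: assumes D: "0 < D" "D < gg l"
  shows "\<exists>n\<ge>1. D < gg l * l^(n-1) \<and> gg l * l^n \<le> D"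
proof -
  have g: "0 < gg l" by (rule gg_props(1)[OF l0 l1])
  obtain m where m: "l^m < D / gg l" using real_arch_pow_inv[of "D / gg l" l] D g lf(1)[OF l0 l1] by auto
  have Pm: "gg l * l^m \<le> D" using m g by (simp add: field_simps)
  define n where "n = (LEAST n. gg l * l^n \<le> D)"
  have Pn: "gg l * l^n \<le> D" unfolding n_def by (rule LeastI[of _ m]) (rule Pm)
  have n0: "n \<noteq> 0" using Pn D by (intro notI) simp
  have "\<not> gg l * l^(n-1) \<le> D"
  proof
    assume "gg l * l^(n-1) \<le> D"
    then have "n \<le> n - 1" unfolding n_def by (rule Least_le)
    then show False using n0 by simp
  qed
  then show ?thesis using Pn n0 by (intro exI[of _ n]) simp
qed

lemma PICK:
  assumes s: "0 < s" "s \<le> s0 l" and b: "bounded U" and dU: "diameter U \<le> gg l / 2" and e: "0 < e"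
  shows "\<exists>c n. c \<in> SigA \<and> 1 \<le> n \<and> (\<forall>d\<in>SigA. pp l d \<in> U \<longrightarrow> d \<in> cyl c n)
           \<and> (1 / rho) ^ n \<le> hcontrib s U / (gg l powr s) + e"
proof -
  have g: "0 < gg l" by (rule gg_props(1)[OF l0 l1])
  have rg: "rho > 3" by (rule rho_gt)
  have G: "0 < gg l powr s" using g by simp
  have hnn: "0 \<le> hcontrib s U / (gg l powr s)" using G hcontrib_nonneg by simp
  obtain n0 where n0: "(1 / rho) ^ n0 < e" using real_arch_pow_inv[of e "1/rho"] e rg by auto
  define N where "N = Suc n0"
  have N: "(1 / rho) ^ N < e"
  proof -
    have "(1 / rho) ^ N \<le> (1 / rho) ^ n0" using rg by (intro power_decreasing) (simp_all add: N_def)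
    then show ?thesis using n0 by simp
  qed
  have NB: "(1 / rho) ^ N \<le> hcontrib s U / (gg l powr s) + e" using N hnn by simp
  show ?thesis
  proof (cases "\<exists>c0\<in>SigA. pp l c0 \<in> U")
    case False
    then show ?thesis using NB const2_SigA by (intro exI[of _ "\<lambda>_. 2"] exI[of _ N]) (auto simp: N_def)
  next
    case True
    then obtain c0 where c0: "c0 \<in> SigA" "pp l c0 \<in> U" by blast
    have d0: "0 \<le> diameter U" by (rule diameter_ge_0[OF b])
    show ?thesis
    proof (cases "diameter U = 0")
      case True
      have "diameter U < gg l * l^(N-1)" using True g l0 by simp
      then have "\<forall>d\<in>SigA. pp l d \<in> U \<longrightarrow> d \<in> cyl c0 N"
        using one_cyl[OF l0 l1 b c0] by (simp add: N_def)
      then show ?thesis using NB c0 by (intro exI[of _ c0] exI[of _ N]) (simp add: N_def)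
    next
      case False
      then have dpos: "0 < diameter U" using d0 by simp
      have "diameter U < gg l" using dU g by simp
      then obtain n where n: "1 \<le> n" "diameter U < gg l * l^(n-1)" "gg l * l^n \<le> diameter U"
        using SL2 dpos by blast
      have cy: "\<forall>d\<in>SigA. pp l d \<in> U \<longrightarrow> d \<in> cyl c0 n" using one_cyl[OF l0 l1 b c0 n(1) n(2)] by simp
      have "(gg l * l^n) powr s \<le> diameter U powr s" using n(3) g l0 s by (intro powr_mono2) simp_all
      moreover have "(gg l * l^n) powr s = gg l powr s * (l powr s) ^ n"
        using g l0 by (simp add: powr_mult powr_pow)
      moreover have "(1 / rho) ^ n \<le> (l powr s) ^ n"
        using lpow_ge[OF l0 l1 s(2)] rg by (intro power_mono) simp_all
      ultimately have "gg l powr s * (1 / rho) ^ n \<le> diameter U powr s"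
        using G by (smt (verit) mult_left_mono)
      then have "(1 / rho) ^ n \<le> diameter U powr s / (gg l powr s)" using G by (simp add: field_simps)
      moreover have "hcontrib s U = diameter U powr s" using s c0 by (auto simp: hcontrib_def)
      ultimately have "(1 / rho) ^ n \<le> hcontrib s U / (gg l powr s) + e" using e by simp
      then show ?thesis using c0 n(1) cy by blast
    qed
  qed
qed

lemma E_lower:
  fixes U :: "nat \<Rightarrow> real set"
  assumes s: "0 < s" "s \<le> s0 l" and cov: "pp l ` SigA \<subseteq> (\<Union>i. U i)"
    and bd: "\<And>i. bounded (U i)" "\<And>i. diameter (U i) \<le> gg l / 2"
  shows "ennreal (gg l powr s / (4 * rho)) \<le> (\<Sum>i. ennreal (hcontrib s (U i)))"
proof -
  have g: "0 < gg l" by (rule gg_props(1)[OF l0 l1])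
  have rg: "rho > 3" by (rule rho_gt)
  define G where "G = gg l powr s"
  have G: "0 < G" using g by (simp add: G_def)
  define e where "e i = 1 / (4 * rho) * (1/2) ^ Suc i" for i :: nat
  have epos: "0 < e i" for i using rg by (simp add: e_def)
  have esum: "e sums (1 / (4 * rho))"
  proof -
    have "(\<lambda>i. 1 / (4 * rho) / 2 * (1/2::real) ^ i) sums (1 / (4 * rho) / 2 * (1 / (1 - 1/2)))"
      by (intro sums_mult geometric_sums) simp
    moreover have "(\<lambda>i. 1 / (4 * rho) / 2 * (1/2::real) ^ i) = e" by (simp add: fun_eq_iff e_def)
    ultimately show ?thesis by simp
  qed
  define Good where "Good i p \<longleftrightarrow> fst p \<in> SigA \<and> 1 \<le> snd p \<and> (\<forall>d\<in>SigA. pp l d \<in> U i \<longrightarrow> d \<in> cyl (fst p) (snd p))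
           \<and> (1 / rho) ^ snd p \<le> hcontrib s (U i) / G + e i" for i p
  have "\<forall>i. \<exists>p. Good i p"
  proof
    fix i
    obtain c n where "c \<in> SigA \<and> 1 \<le> n \<and> (\<forall>d\<in>SigA. pp l d \<in> U i \<longrightarrow> d \<in> cyl c n)
           \<and> (1 / rho) ^ n \<le> hcontrib s (U i) / (gg l powr s) + e i"
      using PICK[OF s bd(1) bd(2) epos] by blast
    then have "Good i (c, n)" by (simp add: Good_def G_def)
    then show "\<exists>p. Good i p" by blast
  qed
  then have "\<exists>P. \<forall>i. Good i (P i)" by (rule choice)
  then obtain P where P: "\<forall>i. Good i (P i)" by (elim exE)
  define cc where "cc i = fst (P i)" for i
  define nn where "nn i = snd (P i)" for i
  have Pi: "cc i \<in> SigA" "1 \<le> nn i" "\<forall>d\<in>SigA. pp l d \<in> U i \<longrightarrow> d \<in> cyl (cc i) (nn i)"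
     "(1 / rho) ^ nn i \<le> hcontrib s (U i) / G + e i" for i
    using spec[OF P, of i] unfolding Good_def cc_def nn_def by blast+
  have covA: "SigA \<subseteq> (\<Union>i\<in>UNIV. cyl (cc i) (nn i))"
  proof
    fix d assume d: "d \<in> SigA"
    then have "pp l d \<in> (\<Union>i. U i)" using cov by blast
    then obtain i where "pp l d \<in> U i" by blast
    then show "d \<in> (\<Union>i\<in>UNIV. cyl (cc i) (nn i))" using Pi(3)[of i] d by blast
  qed
  obtain F where F: "F \<subseteq> UNIV" "finite F" "SigA \<subseteq> (\<Union>i\<in>F. cyl (cc i) (nn i))"
    using compactE_image[OF SigA_compact cyl_open covA] by blast
  have Fne: "F \<noteq> {}" using F(3) const2_SigA by blast
  define N where "N = Max (nn ` F)"
  have nnN: "nn i \<le> N" if "i \<in> F" for i using F(2) that by (simp add: N_def)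
  have N1: "1 \<le> N" using Fne nnN Pi(2) by (meson all_not_in_conv le_trans)
  define B where "B i = {w \<in> Wd N. take (nn i) w = pref (nn i) (cc i)}" for i
  have WB: "Wd N \<subseteq> (\<Union>i\<in>F. B i)"
  proof
    fix w assume w: "w \<in> Wd N"
    then have aw: "adm w" "length w = N" by (simp_all add: Wd_def)
    have "extw w \<in> SigA" by (rule extw_SigA[OF aw(1)])
    then obtain i where i: "i \<in> F" "extw w \<in> cyl (cc i) (nn i)" using F(3) by blast
    have "take (nn i) w = pref (nn i) (cc i)"
    proof (rule nth_equalityI)
      show "length (take (nn i) w) = length (pref (nn i) (cc i))" using aw nnN[OF i(1)] by (simp add: pref_def)
      fix j assume "j < length (take (nn i) w)"
      then have j: "j < nn i" "j < length w" by simp_all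
      have "extw w j = cc i j" using i(2) j(1) by (simp add: cyl_def)
      then show "take (nn i) w ! j = pref (nn i) (cc i) ! j" using j by (simp add: extw_def pref_def)
    qed
    then show "w \<in> (\<Union>i\<in>F. B i)" using i(1) w by (auto simp: B_def)
  qed
  have "card (Wd N) \<le> card (\<Union>i\<in>F. B i)"
    using WB F(2) Wd_finite by (intro card_mono) (auto simp: B_def)
  also have "\<dots> \<le> (\<Sum>i\<in>F. card (B i))" using F(2) by (rule card_UN_le)
  finally have c1: "real (card (Wd N)) \<le> (\<Sum>i\<in>F. real (card (B i)))" by (metis of_nat_le_iff of_nat_sum)
  have c2: "real (card (B i)) \<le> sqrt 2 * rho ^ N * (1 / rho) ^ nn i" if "i \<in> F" for i
  proof -
    have "real (card (B i)) \<le> sqrt 2 * rho ^ (N - nn i)" unfolding B_def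
      by (rule Wd_ext_card[where u="pref (nn i) (cc i)" and n="nn i" and N=N])
         (use Pi(2)[of i] nnN[OF that] pref_adm[OF Pi(1)[of i]] in \<open>simp_all add: pref_def\<close>)
    also have "rho ^ (N - nn i) = rho ^ N * (1 / rho) ^ nn i"
      using nnN[OF that] rg by (simp add: power_diff power_one_over)
    finally show ?thesis by simp
  qed
  define S where "S = (\<Sum>i\<in>F. (1 / rho) ^ nn i)"
  have "rho ^ (N - 1) / sqrt 2 \<le> real (card (Wd N))"
    using Wd_lower[of "N - 1"] N1 by simp
  also have "\<dots> \<le> (\<Sum>i\<in>F. sqrt 2 * rho ^ N * (1 / rho) ^ nn i)" using c1 c2 sum_mono by (smt (verit))
  also have "\<dots> = sqrt 2 * rho ^ N * S" by (simp add: S_def sum_distrib_left)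
  finally have c3: "rho ^ (N - 1) / sqrt 2 \<le> sqrt 2 * rho ^ N * S" .
  have "rho ^ N = rho * rho ^ (N - 1)" using N1 by (metis Suc_diff_le diff_Suc_1 power_Suc)
  then have "rho ^ (N - 1) / sqrt 2 \<le> sqrt 2 * (rho * rho ^ (N - 1)) * S" using c3 by simp
  moreover have "0 < rho ^ (N - 1)" using rg by simp
  ultimately have "1 / sqrt 2 \<le> sqrt 2 * rho * S" by (simp add: field_simps)
  then have "1 \<le> sqrt 2 * sqrt 2 * rho * S" by (simp add: field_simps)
  then have S1: "1 / (2 * rho) \<le> S" using rg by (simp add: field_simps)
  define H where "H = (\<Sum>i\<in>F. hcontrib s (U i))"
  have "S \<le> (\<Sum>i\<in>F. hcontrib s (U i) / G + e i)" unfolding S_def using Pi(4) by (intro sum_mono)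
  also have "\<dots> = H / G + (\<Sum>i\<in>F. e i)" by (simp add: H_def sum.distrib sum_divide_distrib)
  also have "(\<Sum>i\<in>F. e i) \<le> 1 / (4 * rho)"
    using sum_le_suminf[OF sums_summable[OF esum] F(2)] epos sums_unique[OF esum] by (simp add: less_imp_le)
  finally have "1 / (2 * rho) \<le> H / G + 1 / (4 * rho)" using S1 by simp
  then have "1 / (4 * rho) \<le> H / G" by simp
  then have HG: "G / (4 * rho) \<le> H" using G rg by (simp add: field_simps)
  have "ennreal (G / (4 * rho)) \<le> ennreal H" using HG by (rule ennreal_leI)
  also have "ennreal H = (\<Sum>i\<in>F. ennreal (hcontrib s (U i)))"
    unfolding H_def by (rule sum_ennreal[symmetric]) (rule hcontrib_nonneg)
  also have "\<dots> \<le> (\<Sum>i. ennreal (hcontrib s (U i)))"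
    by (rule sum_le_suminf[OF summableI F(2)]) simp
  finally show ?thesis by (simp add: G_def)
qed

end


definition catk :: "nat \<Rightarrow> (nat \<Rightarrow> nat) \<Rightarrow> nat \<Rightarrow> nat" where
  "catk k d = (\<lambda>n. if n < 2*k then (if even n then 2 else 4) else d (n - 2*k))"

definition Gw :: "real \<Rightarrow> nat list \<Rightarrow> real \<Rightarrow> real" where
  "Gw l ws y = (\<Sum>j<length ws. l^j * tt l (ws ! j)) + l^(length ws) * y"

lemma catk_Sig: "d \<in> SigA \<Longrightarrow> catk k d \<in> Sig"
  by (auto simp: catk_def Sig_def SigA_def)

lemma catk_no31: assumes d: "d \<in> SigA" shows "no31 (catk k d)"
  unfolding no31_def
proof (intro allI notI)
  fix n assume a: "catk k d n = 3 \<and> catk k d (Suc n) = 1"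
  then have n: "\<not> n < 2*k" by (auto simp: catk_def split: if_splits)
  then have "d (n - 2*k) = 3" "d (Suc (n - 2*k)) = 1" using a by (simp_all add: catk_def Suc_diff_le)
  moreover have "okp (d (n - 2*k)) (d (Suc (n - 2*k)))" using d by (simp add: SigA_def)
  ultimately show False by (simp add: okp_def)
qed

lemma catk_Pset: assumes d: "d \<in> SigA" shows "Pset (catk k d) = (\<lambda>i. 2*i) ` {..<k}"
proof
  show "Pset (catk k d) \<subseteq> (\<lambda>i. 2*i) ` {..<k}"
  proof
    fix n assume "n \<in> Pset (catk k d)"
    then have a: "catk k d n = 2" "catk k d (Suc n) = 4" by (simp_all add: Pset_def)
    show "n \<in> (\<lambda>i. 2*i) ` {..<k}"
    proof (cases "n < 2*k")
      case True
      then have "even n" using a by (auto simp: catk_def split: if_splits)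
      then obtain i where "n = 2*i" by blast
      then show ?thesis using True by auto
    next
      case False
      then have "d (n - 2*k) = 2" "d (Suc (n - 2*k)) = 4" using a by (simp_all add: catk_def Suc_diff_le)
      moreover have "okp (d (n - 2*k)) (d (Suc (n - 2*k)))" using d by (simp add: SigA_def)
      ultimately show ?thesis by (simp add: okp_def)
    qed
  qed
  show "(\<lambda>i. 2*i) ` {..<k} \<subseteq> Pset (catk k d)"
  proof
    fix n assume "n \<in> (\<lambda>i. 2*i) ` {..<k}"
    then obtain i where i: "i < k" "n = 2*i" by blast
    then have "Suc n < 2*k" by simp
    then show "n \<in> Pset (catk k d)" using i by (simp add: Pset_def catk_def)
  qed
qed

lemma card_catk_Pset: "d \<in> SigA \<Longrightarrow> finite (Pset (catk k d)) \<and> card (Pset (catk k d)) = k"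
  using catk_Pset[of d k] by (simp add: card_image inj_on_def)

context
  fixes l :: real
  assumes l0: "0 < l" and l1: "l < (5 - sqrt 21) / 2"
begin

lemma catk_in_U: assumes d: "d \<in> SigA" shows "pp l (catk k d) \<in> Ufin l (2^k)"
proof -
  have u: "catk k d \<in> Sig" "no31 (catk k d)" using catk_Sig catk_no31 d by auto
  have "Nf (catk k d) = catk k d" using u(2) by (rule Nf_id)
  moreover have "finite (Dset (catk k d)) \<and> card (Dset (catk k d)) = 2 ^ k"
    using Dset_card(1)[OF u] card_catk_Pset[OF d] by auto
  ultimately show ?thesis using u(1) by (subst Ufin_char[OF l0 l1]) auto
qed

lemma catk_pp: assumes d: "d \<in> SigA"
  shows "pp l (catk k d) = (\<Sum>j<2*k. l^j * tt l (if even j then 2 else 4)) + l^(2*k) * pp l d"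
proof -
  have "pp l (catk k d) = (\<Sum>j<2*k. l^j * tt l (catk k d j)) + l^(2*k) * pp l (shift (2*k) (catk k d))"
    by (rule pp_shift[OF l0 l1 catk_Sig[OF d]])
  moreover have "shift (2*k) (catk k d) = d" by (simp add: fun_eq_iff shift_def catk_def)
  moreover have "(\<Sum>j<2*k. l^j * tt l (catk k d j)) = (\<Sum>j<2*k. l^j * tt l (if even j then 2 else 4))"
    by (intro sum.cong) (simp_all add: catk_def)
  ultimately show ?thesis by simp
qed

lemma U_upper: "Ufin l i \<subseteq> (\<Union>ws. Gw l ws ` (pp l ` SigA))"
proof
  fix x assume "x \<in> Ufin l i"
  then obtain c where c: "c \<in> Sig" "x = pp l c" "finite (Dset (Nf c))" using Ufin_char[OF l0 l1] by blast
  define u where "u = Nf c"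
  have u: "u \<in> Sig" "no31 u" using Nf_Sig[OF c(1)] Nf_no31 by (auto simp: u_def)
  have fP: "finite (Pset u)"
  proof (rule ccontr)
    assume "infinite (Pset u)"
    then have "\<not> countable (Dset u)" by (rule Dset_card(2)[OF u])
    then show False using countable_finite[OF c(3)] by (simp add: u_def)
  qed
  then obtain m where m: "\<forall>n\<in>Pset u. n < m" using finite_nat_set_iff_bounded by blast
  have sA: "shift m u \<in> SigA"
  proof -
    have "okp (u (n + m)) (u (Suc n + m))" for n
    proof -
      have "n + m \<notin> Pset u" using m by fastforce
      then have "\<not> (u (n + m) = 2 \<and> u (Suc (n + m)) = 4)" by (simp add: Pset_def)
      moreover have "\<not> (u (n + m) = 3 \<and> u (Suc (n + m)) = 1)" using u(2) by (simp add: no31_def)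
      ultimately show ?thesis by (simp add: okp_def)
    qed
    then show ?thesis using shift_Sig[OF u(1)] by (simp add: SigA_def shift_def)
  qed
  have "x = pp l u" using c pp_Nf[OF l0 l1 c(1)] by (simp add: u_def)
  also have "\<dots> = (\<Sum>j<m. l^j * tt l (u j)) + l^m * pp l (shift m u)" by (rule pp_shift[OF l0 l1 u(1)])
  also have "\<dots> = Gw l (pref m u) (pp l (shift m u))"
    unfolding Gw_def by (simp add: pref_def)
  finally show "x \<in> (\<Union>ws. Gw l ws ` (pp l ` SigA))" using sA by blast
qed

lemma Gw_lip: "\<bar>Gw l ws x - Gw l ws y\<bar> \<le> l^(length ws) * \<bar>x - y\<bar>"
  using l0 by (simp add: Gw_def abs_mult right_diff_distrib[symmetric])

lemma union_zero: assumes s: "s > s0 l" shows "hausdorff_measure s (\<Union>ws. Gw l ws ` (pp l ` SigA)) = 0"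
proof -
  have s_pos: "0 \<le> s" using s s0_pos[OF l0 l1] by linarith
  have z: "hausdorff_measure s (Gw l ws ` (pp l ` SigA)) = 0" for ws
  proof (rule H_lip_zero[OF Gw_lip])
    show "0 \<le> l ^ length ws" using l0 by simp
    show "l ^ length ws \<le> 1" using l0 lf(1)[OF l0 l1] by (simp add: power_le_one)
  qed (use s_pos E_upper[OF l0 l1 s] in auto)
  have "(\<Union>ws. Gw l ws ` (pp l ` SigA)) = (\<Union>k. Gw l (from_nat k) ` (pp l ` SigA))"
  proof
    show "(\<Union>ws. Gw l ws ` (pp l ` SigA)) \<subseteq> (\<Union>k. Gw l (from_nat k) ` (pp l ` SigA))"
    proof
      fix x assume "x \<in> (\<Union>ws. Gw l ws ` (pp l ` SigA))"
      then obtain ws where "x \<in> Gw l ws ` (pp l ` SigA)" by blast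
      moreover have "from_nat (to_nat ws) = ws" by simp
      ultimately show "x \<in> (\<Union>k. Gw l (from_nat k) ` (pp l ` SigA))" by (metis UN_I UNIV_I)
    qed
  qed blast
  then show ?thesis using H_union_zero[of s "\<lambda>k. Gw l (from_nat k) ` (pp l ` SigA)"] z by simp
qed

lemma affine_pos:
  assumes r: "0 < r" and s: "0 \<le> s" "s \<le> s0 l"
  shows "hausdorff_measure s ((\<lambda>y. b + r * y) ` (pp l ` SigA)) \<noteq> 0"
proof -
  let ?E = "pp l ` SigA"
  let ?X = "(\<lambda>y. b + r * y) ` ?E"
  have Xne: "?X \<noteq> {}" using const2_SigA by blast
  have g: "0 < gg l" by (rule gg_props(1)[OF l0 l1])
  show ?thesis
  proof (cases "s = 0")
    case True
    have "1 \<le> hausdorff_pre 0 1 ?X" by (rule H0_pos[OF Xne]) simp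
    also have "\<dots> \<le> hausdorff_measure 0 ?X" unfolding hausdorff_measure_def by (intro SUP_upper) simp
    finally show ?thesis using True by auto
  next
    case False
    then have sp: "0 < s" using s by simp
    define c where "c = gg l powr s / (4 * rho)"
    have cpos: "0 < c" using g rho_gt by (simp add: c_def)
    define \<delta> where "\<delta> = r * (gg l / 2)"
    have dpos: "0 < \<delta>" using r g by (simp add: \<delta>_def)
    define k where "k = 1 / r powr s"
    have kpos: "0 < k" using r by (simp add: k_def)
    have key: "ennreal (r powr s * c) \<le> (\<Sum>i. ennreal (hcontrib s (V i)))"
      if V: "?X \<subseteq> (\<Union>i. V i)" "\<And>i. bounded (V i)" "\<And>i. diameter (V i) \<le> \<delta>" for V :: "nat \<Rightarrow> real set"
    proof -
      define Ginv where "Ginv y = (y - b) / r" for y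
      have lipG: "\<bar>Ginv x - Ginv y\<bar> \<le> (1 / r) * \<bar>x - y\<bar>" for x y
        using r by (simp add: Ginv_def abs_divide diff_divide_distrib[symmetric])
      define U where "U i = Ginv ` V i" for i
      have bU: "bounded (U i)" "diameter (U i) \<le> (1/r) * diameter (V i)" for i
        unfolding U_def using lip_image[OF lipG _ V(2)] r by auto
      have dU: "diameter (U i) \<le> gg l / 2" for i
      proof -
        have "diameter (V i) \<le> r * (gg l / 2)" using V(3)[of i] by (simp add: \<delta>_def)
        then have "diameter (V i) / r \<le> gg l / 2" using r by (simp add: pos_divide_le_eq mult.commute)
        moreover have "diameter (U i) \<le> diameter (V i) / r" using bU(2)[of i] by simp
        ultimately show ?thesis by linarith
      qed
      have covU: "?E \<subseteq> (\<Union>i. U i)"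
      proof
        fix x assume "x \<in> ?E"
        then have "b + r * x \<in> (\<Union>i. V i)" using V(1) by blast
        then obtain i where "b + r * x \<in> V i" by blast
        moreover have "Ginv (b + r * x) = x" using r by (simp add: Ginv_def)
        ultimately show "x \<in> (\<Union>i. U i)" unfolding U_def by (metis UN_I UNIV_I imageI)
      qed
      have low: "ennreal c \<le> (\<Sum>i. ennreal (hcontrib s (U i)))"
        unfolding c_def by (rule E_lower[OF l0 l1 sp s(2) covU bU(1) dU])
      have hU: "hcontrib s (U i) \<le> k * hcontrib s (V i)" for i
      proof (cases "V i = {}")
        case True then show ?thesis by (simp add: U_def hcontrib_def)
      next
        case False
        have "diameter (U i) powr s \<le> ((1/r) * diameter (V i)) powr s"
          using bU(2)[of i] diameter_ge_0[OF bU(1)[of i]] sp by (intro powr_mono2) simp_all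
        also have "\<dots> = k * diameter (V i) powr s"
          using r diameter_ge_0[OF V(2)[of i]] by (simp add: powr_mult k_def powr_divide)
        finally show ?thesis using False sp by (simp add: U_def hcontrib_def)
      qed
      have "(\<Sum>i. ennreal (hcontrib s (U i))) \<le> (\<Sum>i. ennreal k * ennreal (hcontrib s (V i)))"
      proof (rule suminf_le)
        show "ennreal (hcontrib s (U i)) \<le> ennreal k * ennreal (hcontrib s (V i))" for i
          using hU[of i] kpos hcontrib_nonneg by (simp add: ennreal_mult[symmetric] ennreal_leI)
      qed (rule summableI)+
      also have "\<dots> = ennreal k * (\<Sum>i. ennreal (hcontrib s (V i)))" by (rule ennreal_suminf_cmult)
      finally have "ennreal c \<le> ennreal k * (\<Sum>i. ennreal (hcontrib s (V i)))" using low by simp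
      then have "ennreal (r powr s) * ennreal c \<le> ennreal (r powr s) * (ennreal k * (\<Sum>i. ennreal (hcontrib s (V i))))"
        by (rule mult_left_mono) simp
      also have "\<dots> = ennreal (r powr s * k) * (\<Sum>i. ennreal (hcontrib s (V i)))"
        using kpos by (simp add: ennreal_mult mult.assoc)
      also have "r powr s * k = 1" using r by (simp add: k_def)
      finally show ?thesis using cpos by (simp add: ennreal_mult)
    qed
    have "ennreal (r powr s * c) \<le> hausdorff_pre s \<delta> ?X"
      unfolding hausdorff_pre_def by (rule INF_greatest) (use key in blast)
    also have "\<dots> \<le> hausdorff_measure s ?X" unfolding hausdorff_measure_def using dpos by (intro SUP_upper) simp
    finally have "ennreal (r powr s * c) \<le> hausdorff_measure s ?X" .
    moreover have "0 < r powr s * c" using r cpos by simp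
    ultimately show ?thesis by (metis ennreal_eq_0_iff le_zero_eq not_le)
  qed
qed

lemma U1_eq: "Ufin l 1 = pp l ` SigA"
proof
  show "Ufin l 1 \<subseteq> pp l ` SigA"
  proof
    fix x assume "x \<in> Ufin l 1"
    then obtain c where c: "c \<in> Sig" "x = pp l c" "finite (Dset (Nf c))" "card (Dset (Nf c)) = 1"
      using Ufin_char[OF l0 l1] by blast
    define u where "u = Nf c"
    have u: "u \<in> Sig" "no31 u" using Nf_Sig[OF c(1)] Nf_no31 by (auto simp: u_def)
    have fP: "finite (Pset u)"
    proof (rule ccontr)
      assume "infinite (Pset u)"
      then have "\<not> countable (Dset u)" by (rule Dset_card(2)[OF u])
      then show False using countable_finite[OF c(3)] by (simp add: u_def)
    qed
    then have "card (Dset u) = 2 ^ card (Pset u)" using Dset_card(1)[OF u] by blast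
    then have "2 ^ card (Pset u) = Suc 0" using c(4) by (simp add: u_def)
    then have "card (Pset u) = 0" by (simp add: nat_power_eq_Suc_0_iff)
    then have "Pset u = {}" using fP by simp
    then have "u \<in> SigA" using u by (auto simp: SigA_def okp_def Pset_def no31_def)
    moreover have "x = pp l u" using c pp_Nf[OF l0 l1 c(1)] by (simp add: u_def)
    ultimately show "x \<in> pp l ` SigA" by blast
  qed
  show "pp l ` SigA \<subseteq> Ufin l 1"
  proof
    fix x assume "x \<in> pp l ` SigA"
    then obtain c where c: "c \<in> SigA" "x = pp l c" by blast
    have u: "c \<in> Sig" "no31 c" using c SigA_Sig SigA_no31 by auto
    have "Nf c = c" using u(2) by (rule Nf_id)
    moreover have "Pset c = {}" using c(1) by (auto simp: SigA_def okp_def Pset_def)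
    then have "finite (Dset c) \<and> card (Dset c) = 1" using Dset_card(1)[OF u] by simp
    ultimately show "x \<in> Ufin l 1" using u(1) c(2) by (subst Ufin_char[OF l0 l1]) auto
  qed
qed

lemma dims:
  shows "hausdorff_dim (Ufin l 1) = s0 l"
    and "k \<ge> 1 \<Longrightarrow> hausdorff_dim (Ufin l (2^k)) = s0 l"
proof -
  have s0: "0 \<le> s0 l" using s0_pos[OF l0 l1] by simp
  show "hausdorff_dim (Ufin l 1) = s0 l"
  proof (rule dim_eq[OF s0])
    show "hausdorff_measure s (Ufin l 1) = 0" if "s > s0 l" for s
      unfolding U1_eq by (rule E_upper[OF l0 l1 that])
    show "hausdorff_measure s (Ufin l 1) \<noteq> 0" if "0 \<le> s" "s \<le> s0 l" for s
    proof -
      have "hausdorff_measure s ((\<lambda>y. 0 + 1 * y) ` (pp l ` SigA)) \<noteq> 0" by (rule affine_pos[OF _ that]) simp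
      moreover have "(\<lambda>y. 0 + 1 * y) ` (pp l ` SigA) = pp l ` SigA" by simp
      ultimately show ?thesis unfolding U1_eq by simp
    qed
  qed
  show "hausdorff_dim (Ufin l (2^k)) = s0 l"
  proof (rule dim_eq[OF s0])
    show "hausdorff_measure s (Ufin l (2^k)) = 0" if "s > s0 l" for s
      using H_mono[OF U_upper, of s "2^k"] union_zero[OF that] by simp
    show "hausdorff_measure s (Ufin l (2^k)) \<noteq> 0" if "0 \<le> s" "s \<le> s0 l" for s
    proof -
      define b where "b = (\<Sum>j<2*k. l^j * tt l (if even j then 2 else 4))"
      have "(\<lambda>y. b + l^(2*k) * y) ` (pp l ` SigA) \<subseteq> Ufin l (2^k)"
        using catk_in_U catk_pp by (auto simp: b_def)
      then have "hausdorff_measure s ((\<lambda>y. b + l^(2*k) * y) ` (pp l ` SigA)) \<le> hausdorff_measure s (Ufin l (2^k))"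
        by (rule H_mono)
      moreover have "hausdorff_measure s ((\<lambda>y. b + l^(2*k) * y) ` (pp l ` SigA)) \<noteq> 0"
        using affine_pos[OF _ that] l0 by simp
      ultimately show ?thesis by (metis le_zero_eq)
    qed
  qed
qed

end


theorem theorem2p23:
  fixes lam :: real
  assumes "0 < lam" and "lam < (5 - sqrt 21) / 2"
  shows "(\<forall>k::nat. k \<ge> 1 \<longrightarrow> hausdorff_dim (Ufin lam (2 ^ k)) = hausdorff_dim (Ufin lam 1))
       \<and> hausdorff_dim (Ufin lam 1) = ln (2 + sqrt 2) / (- ln lam)
       \<and> (\<forall>i::nat. 0 < i \<longrightarrow> \<not> (\<exists>k::nat. i = 2 ^ k) \<longrightarrow> Ufin lam i = {})
       \<and> Ualeph0 lam = {}"
proof -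
  have d1: "hausdorff_dim (Ufin lam 1) = s0 lam" by (rule dims(1)[OF assms])
  have dk: "hausdorff_dim (Ufin lam (2^k)) = s0 lam" if "k \<ge> 1" for k by (rule dims(2)[OF assms that])
  have e: "s0 lam = ln (2 + sqrt 2) / (- ln lam)" by (simp add: s0_def rho_def)
  have u: "\<forall>i::nat. 0 < i \<longrightarrow> \<not> (\<exists>k::nat. i = 2 ^ k) \<longrightarrow> Ufin lam i = {}"
    using Ufin_empty[OF assms] by blast
  show ?thesis using d1 dk e u Ualeph0_empty[OF assms] by simp
qed

end
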